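(* Let $F$ be an unsatisfiable CNF formula over variables $X \cup Y \cup Z$ (pairwise disjoint), $X=\{x_1,\ldots,x_n\}$, such that for every truth assignment to $X \cup Y$ the values of the variables in $Z$ are obtained from it by unit propagation in $F$. Let $c_X(F) = \{\gamma \vee \neg a \vee \neg b \mid \gamma \in F\} \cup \{\neg x_i \vee v_i \mid 1\le i\le n\} \cup \{x_i \vee v_i \mid 1\le i\le n\} \cup \{\neg v_1 \vee \cdots \vee \neg v_n \vee a\} \cup \{\neg v_1 \vee \cdots \vee \neg v_n \vee b\}$, where $a,b,v_1,\ldots,v_n$ are new variables. Then, with branching restricted to the variables in $X \cup Y$, there exists a minimum-size DPLL-Mono search tree of $c_X(F)$ consisting of a complete tree over $X$ (every path from the root to an empty subtree contains exactly one node labelled by each variable of $X$) in which every empty subtree is replaced by a tree whose nodes are labelled by variables of $Y$.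
   Context: A CNF formula is a finite set of clauses; the empty clause is unsatisfiable. For a partial assignment $I$ (set of literals), $F|I$ is obtained by deleting clauses containing a literal true under $I$ and deleting false literals from remaining clauses. $Var(F)$ is the set of variables of $F$. A binary tree is empty $()$ or a triple $(x~T_1~T_2)$; its size is its number of nodes. $U(F)$ denotes the result of exhaustively applying unit propagation to $F$ (a unit clause $l$ forces the restriction by $\{l\}$). For a set $B$ of variables, a DPLL-Mono search tree (DMST) of $F$ with branching restricted to $B$ is: $()$ if $U(F)$ contains the empty clause; otherwise $(x~T_1~T_2)$ with $x \in B \cap Var(U(F))$, $T_1$ a DMST of $U(F|\{\neg x\})$ and $T_2$ a DMST of $U(F|\{x\})$, both with branching restricted to $B$. *)

theory Defs
  imports Main
begin

datatype 'a lit = Pos 'a | Neg 'a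

fun var :: "'a lit \<Rightarrow> 'a" where
  "var (Pos x) = x" | "var (Neg x) = x"

fun comp :: "'a lit \<Rightarrow> 'a lit" where
  "comp (Pos x) = Neg x" | "comp (Neg x) = Pos x"

type_synonym 'a clause = "'a lit set"
type_synonym 'a cnf = "'a clause set"

fun lit_true :: "('a \<Rightarrow> bool) \<Rightarrow> 'a lit \<Rightarrow> bool" where
  "lit_true \<alpha> (Pos x) = \<alpha> x" | "lit_true \<alpha> (Neg x) = (\<not> \<alpha> x)"

definition satisfiable :: "'a cnf \<Rightarrow> bool" where
  "satisfiable F \<longleftrightarrow> (\<exists>\<alpha>. \<forall>C\<in>F. \<exists>l\<in>C. lit_true \<alpha> l)"

definition Var :: "'a cnf \<Rightarrow> 'a set" where
  "Var F = var ` (\<Union>F)"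

definition restrict :: "'a cnf \<Rightarrow> 'a lit set \<Rightarrow> 'a cnf" where
  "restrict F I = {C - comp ` I | C. C \<in> F \<and> C \<inter> I = {}}"

definition assign_lits :: "('a \<Rightarrow> bool) \<Rightarrow> 'a set \<Rightarrow> 'a lit set" where
  "assign_lits \<alpha> S = {Pos x | x. x \<in> S \<and> \<alpha> x} \<union> {Neg x | x. x \<in> S \<and> \<not> \<alpha> x}"

definition up_step :: "'a cnf \<Rightarrow> 'a cnf" where
  "up_step F = (if {} \<in> F \<or> \<not> (\<exists>l. {l} \<in> F) then F
                else restrict F {SOME l. {l} \<in> F})"

text \<open>U(F): exhaustive unit propagation. Every effective step removes at least one
  variable, so card (Var F) + 1 iterations reach the fixpoint for finite F.\<close>
definition U :: "'a cnf \<Rightarrow> 'a cnf" where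
  "U F = (up_step ^^ Suc (card (Var F))) F"

inductive up_lit :: "'a cnf \<Rightarrow> 'a lit \<Rightarrow> bool" for F where
  "C \<in> F \<Longrightarrow> l \<in> C \<Longrightarrow> (\<forall>l'\<in>C - {l}. up_lit F (comp l')) \<Longrightarrow> up_lit F l"

datatype 'a btree = E | N 'a "'a btree" "'a btree"

fun tsize :: "'a btree \<Rightarrow> nat" where
  "tsize E = 0" | "tsize (N x l r) = Suc (tsize l + tsize r)"

fun labels :: "'a btree \<Rightarrow> 'a set" where
  "labels E = {}" | "labels (N x l r) = insert x (labels l \<union> labels r)"

inductive is_dmst :: "'a set \<Rightarrow> 'a cnf \<Rightarrow> 'a btree \<Rightarrow> bool" where
  dmst_E: "{} \<in> U F \<Longrightarrow> is_dmst B F E"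
| dmst_N: "{} \<notin> U F \<Longrightarrow> x \<in> B \<inter> Var (U F) \<Longrightarrow>
           is_dmst B (U (restrict (U F) {Neg x})) T1 \<Longrightarrow>
           is_dmst B (U (restrict (U F) {Pos x})) T2 \<Longrightarrow>
           is_dmst B F (N x T1 T2)"

definition min_dmst :: "'a set \<Rightarrow> 'a cnf \<Rightarrow> 'a btree \<Rightarrow> bool" where
  "min_dmst B F T \<longleftrightarrow> is_dmst B F T \<and> (\<forall>T'. is_dmst B F T' \<longrightarrow> tsize T \<le> tsize T')"

inductive complete_then :: "'a set \<Rightarrow> 'a set \<Rightarrow> 'a btree \<Rightarrow> bool" where
  ct_base: "labels T \<subseteq> Y \<Longrightarrow> complete_then {} Y T"
| ct_node: "x \<in> X \<Longrightarrow> complete_then (X - {x}) Y T1 \<Longrightarrow> complete_then (X - {x}) Y T2 \<Longrightarrow>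
            complete_then X Y (N x T1 T2)"

datatype 'a ext = Old 'a | A | B | V nat

fun map_lit :: "('a \<Rightarrow> 'b) \<Rightarrow> 'a lit \<Rightarrow> 'b lit" where
  "map_lit f (Pos x) = Pos (f x)" | "map_lit f (Neg x) = Neg (f x)"

text \<open>X = {xv 1, ..., xv n}; fresh variables a = A, b = B, v_i = V i.\<close>
definition cX :: "'a cnf \<Rightarrow> nat \<Rightarrow> (nat \<Rightarrow> 'a) \<Rightarrow> 'a ext cnf" where
  "cX F n xv =
     {map_lit Old ` \<gamma> \<union> {Neg A, Neg B} | \<gamma>. \<gamma> \<in> F}
   \<union> {{Neg (Old (xv i)), Pos (V i)} | i. i \<in> {1..n}}
   \<union> {{Pos (Old (xv i)), Pos (V i)} | i. i \<in> {1..n}}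
   \<union> {insert (Pos A) {Neg (V i) | i. i \<in> {1..n}}}
   \<union> {insert (Pos B) {Neg (V i) | i. i \<in> {1..n}}}"

end

theory Submission
  imports Defs
begin


definition consistent :: "'a lit set \<Rightarrow> bool" where
  "consistent K \<longleftrightarrow> (\<forall>l\<in>K. comp l \<notin> K)"

definition Der :: "'a cnf \<Rightarrow> 'a lit set" where
  "Der G = {l. up_lit G l}"

definition refuted :: "'a cnf \<Rightarrow> bool" where
  "refuted G \<longleftrightarrow> (\<exists>C\<in>G. \<forall>l\<in>C. up_lit G (comp l))"

definition fin :: "'a cnf \<Rightarrow> bool" where
  "fin G \<longleftrightarrow> finite G \<and> (\<forall>C\<in>G. finite C)"

definition stable :: "'a cnf \<Rightarrow> bool" where
  "stable G \<longleftrightarrow> {} \<in> G \<or> \<not> (\<exists>l. {l} \<in> G)"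

definition uequiv :: "'a cnf \<Rightarrow> 'a cnf \<Rightarrow> bool" where
  "uequiv G G' \<longleftrightarrow> (refuted G \<longleftrightarrow> refuted G') \<and> (\<not> refuted G \<longrightarrow> U G = U G')"

lemma comp_comp[simp]: "comp (comp l) = l"
  by (cases l) auto

lemma var_comp[simp]: "var (comp l) = var l"
  by (cases l) auto

lemma comp_neq[simp]: "comp l \<noteq> l"
  by (cases l) auto

lemma comp_inj[simp]: "(comp l = comp k) \<longleftrightarrow> l = k"
  by (metis comp_comp)

lemma var_eq: "var l = var k \<Longrightarrow> l = k \<or> l = comp k"
  by (cases l; cases k) auto

lemma comp_in_image: "(comp l \<in> comp ` K) \<longleftrightarrow> l \<in> K"
  by (metis comp_comp image_iff)

lemma mem_restrict: "C' \<in> restrict G K \<longleftrightarrow> (\<exists>C\<in>G. C \<inter> K = {} \<and> C' = C - comp ` K)"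
  unfolding restrict_def by auto

lemma bex_restrict: "(\<exists>C1\<in>restrict G I. P C1) \<longleftrightarrow> (\<exists>C\<in>G. C \<inter> I = {} \<and> P (C - comp ` I))"
  unfolding mem_restrict Bex_def by blast

lemma restrict_lit_var:
  assumes "C' \<in> restrict G K" "l \<in> C'"
  shows "var l \<notin> var ` K"
proof
  assume "var l \<in> var ` K"
  then obtain k where k: "k \<in> K" "var l = var k" by auto
  from assms obtain C where C: "C \<in> G" "C \<inter> K = {}" "C' = C - comp ` K"
    by (auto simp: mem_restrict)
  from var_eq[OF k(2)] show False
  proof
    assume "l = k" thus False using C assms k by auto
  next
    assume "l = comp k" thus False using C assms k by auto
  qed
qed

lemma Var_restrict: "Var (restrict G K) \<subseteq> Var G - var ` K"
proof
  fix x assume "x \<in> Var (restrict G K)"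
  then obtain C' l where C': "C' \<in> restrict G K" "l \<in> C'" "x = var l"
    by (auto simp: Var_def)
  have "var l \<notin> var ` K" by (rule restrict_lit_var[OF C'(1,2)])
  moreover from C' obtain C where "C \<in> G" "l \<in> C" by (auto simp: mem_restrict)
  ultimately show "x \<in> Var G - var ` K" using C' by (auto simp: Var_def)
qed

lemma fin_restrict: "fin G \<Longrightarrow> fin (restrict G K)"
  unfolding fin_def restrict_def by auto

lemma finite_Var: "fin G \<Longrightarrow> finite (Var G)"
  unfolding fin_def Var_def by auto

lemma restrict_restrict:
  assumes "\<forall>i\<in>I. comp i \<notin> K"
  shows "restrict (restrict G I) K = restrict G (I \<union> K)"
proof -
  have "\<And>C. C \<inter> I = {} \<Longrightarrow> ((C - comp ` I) \<inter> K = {}) = (C \<inter> K = {})"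
  proof -
    fix C assume CI: "C \<inter> I = {}"
    show "((C - comp ` I) \<inter> K = {}) = (C \<inter> K = {})"
    proof
      assume h: "(C - comp ` I) \<inter> K = {}"
      show "C \<inter> K = {}"
      proof (rule ccontr)
        assume "C \<inter> K \<noteq> {}"
        then obtain l where "l \<in> C" "l \<in> K" by auto
        with h have "l \<in> comp ` I" by auto
        then obtain i where "i \<in> I" "l = comp i" by auto
        with assms \<open>l \<in> K\<close> show False by auto
      qed
    qed auto
  qed
  note key = this
  show ?thesis
  proof (rule set_eqI)
    fix C'
    have "C' \<in> restrict (restrict G I) K \<longleftrightarrow>
      (\<exists>C\<in>G. C \<inter> I = {} \<and> (C - comp ` I) \<inter> K = {} \<and> C' = C - comp ` I - comp ` K)"
      unfolding mem_restrict[of C' "restrict G I" K] by (rule bex_restrict)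
    also have "\<dots> \<longleftrightarrow> (\<exists>C\<in>G. C \<inter> (I \<union> K) = {} \<and> C' = C - comp ` (I \<union> K))"
    proof
      assume "\<exists>C\<in>G. C \<inter> I = {} \<and> (C - comp ` I) \<inter> K = {} \<and> C' = C - comp ` I - comp ` K"
      then obtain C where "C\<in>G" "C \<inter> I = {}" "(C - comp ` I) \<inter> K = {}" "C' = C - comp ` I - comp ` K"
        by blast
      moreover have "C \<inter> K = {}" using key[OF \<open>C \<inter> I = {}\<close>] \<open>(C - comp ` I) \<inter> K = {}\<close> by simp
      ultimately show "\<exists>C\<in>G. C \<inter> (I \<union> K) = {} \<and> C' = C - comp ` (I \<union> K)"
        by (intro bexI[of _ C]) (auto simp: image_Un)
    next
      assume "\<exists>C\<in>G. C \<inter> (I \<union> K) = {} \<and> C' = C - comp ` (I \<union> K)"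
      then obtain C where "C\<in>G" "C \<inter> (I \<union> K) = {}" "C' = C - comp ` (I \<union> K)" by blast
      then show "\<exists>C\<in>G. C \<inter> I = {} \<and> (C - comp ` I) \<inter> K = {} \<and> C' = C - comp ` I - comp ` K"
        by (intro bexI[of _ C]) (auto simp: image_Un)
    qed
    also have "\<dots> \<longleftrightarrow> C' \<in> restrict G (I \<union> K)" unfolding mem_restrict ..
    finally show "C' \<in> restrict (restrict G I) K \<longleftrightarrow> C' \<in> restrict G (I \<union> K)" .
  qed
qed

lemma restrict_insert:
  assumes "\<forall>j\<in>J. comp j \<noteq> l"
  shows "restrict (restrict G J) {l} = restrict G (insert l J)"
  using restrict_restrict[of J "{l}" G] assms by auto

lemma restrict_empty[simp]: "restrict G {} = G"
  unfolding restrict_def by auto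

lemma restrict_novar:
  assumes "var l \<notin> Var G"
  shows "restrict G {l} = G"
proof -
  have h: "l \<notin> C \<and> comp l \<notin> C" if "C \<in> G" for C
  proof -
    have "\<And>k. k \<in> C \<Longrightarrow> var k \<in> Var G" using that unfolding Var_def by blast
    then show ?thesis using assms by (metis var_comp)
  qed
  show ?thesis
  proof (rule set_eqI)
    fix C show "C \<in> restrict G {l} \<longleftrightarrow> C \<in> G"
      unfolding mem_restrict using h by auto
  qed
qed

lemma Var_restrict_mono:
  assumes "K' \<subseteq> K"
  shows "Var (restrict G K) \<subseteq> Var (restrict G K')"
proof
  fix x assume "x \<in> Var (restrict G K)"
  then obtain C l where "C \<in> G" "C \<inter> K = {}" "l \<in> C - comp ` K" "x = var l"
    by (auto simp: Var_def mem_restrict)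
  then have "C \<inter> K' = {}" "l \<in> C - comp ` K'" using assms by auto
  then have "C - comp ` K' \<in> restrict G K'" using \<open>C \<in> G\<close> by (auto simp: mem_restrict)
  with \<open>l \<in> C - comp ` K'\<close> \<open>x = var l\<close> show "x \<in> Var (restrict G K')"
    unfolding Var_def by blast
qed



lemma up_lit_clause: "up_lit G l \<Longrightarrow> \<exists>C\<in>G. l \<in> C"
  by (induction rule: up_lit.induct) auto

lemma up_lit_restrict_var: "up_lit (restrict G K) l \<Longrightarrow> var l \<notin> var ` K"
  using up_lit_clause restrict_lit_var by blast

lemma up_lit_intro: "C \<in> G \<Longrightarrow> l \<in> C \<Longrightarrow> (\<And>l'. l' \<in> C \<Longrightarrow> l' \<noteq> l \<Longrightarrow> up_lit G (comp l')) \<Longrightarrow> up_lit G l"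
  by (rule up_lit.intros) auto

lemma stable_up_step: "stable G \<Longrightarrow> up_step G = G"
  unfolding stable_def up_step_def by auto

lemma nonstable_up_step: "\<not> stable G \<Longrightarrow> \<exists>l. {l} \<in> G \<and> up_step G = restrict G {l}"
  unfolding stable_def up_step_def by (auto intro: someI)

lemma funpow_fix: "f x = x \<Longrightarrow> (f ^^ k) x = x"
  by (induction k) auto

lemma iter_inv:
  assumes "fin G"
  shows "\<exists>L. (up_step ^^ k) G = restrict G L \<and> consistent L \<and> L \<subseteq> Der G \<and>
     (stable ((up_step ^^ k) G) \<or> card (Var ((up_step ^^ k) G)) + k \<le> card (Var G))"
proof (induction k)
  case 0
  show ?case by (intro exI[of _ "{}"]) (auto simp: consistent_def)
next
  case (Suc k)
  then obtain L where L: "(up_step ^^ k) G = restrict G L" "consistent L" "L \<subseteq> Der G"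
     "stable ((up_step ^^ k) G) \<or> card (Var ((up_step ^^ k) G)) + k \<le> card (Var G)" by blast
  let ?Gk = "(up_step ^^ k) G"
  show ?case
  proof (cases "stable ?Gk")
    case True
    then have "(up_step ^^ Suc k) G = ?Gk" by (simp add: stable_up_step)
    with L True show ?thesis by auto
  next
    case False
    then obtain l where l: "{l} \<in> ?Gk" "up_step ?Gk = restrict ?Gk {l}"
      using nonstable_up_step by blast
    have vl: "var l \<notin> var ` L" using restrict_lit_var[of "{l}" G L l] l(1) L(1) by auto
    have nc: "\<forall>j\<in>L. comp j \<noteq> l" using vl by (metis image_eqI var_comp)
    have eq: "(up_step ^^ Suc k) G = restrict G (insert l L)"
      using l(2) L(1) restrict_insert[OF nc] by simp
    have "comp l \<notin> L" using vl by (metis image_eqI var_comp)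
    then have cons: "consistent (insert l L)"
      using L(2) nc unfolding consistent_def by auto
    have "l \<in> Der G"
    proof -
      from l(1) L(1) obtain C where C: "C \<in> G" "C \<inter> L = {}" "{l} = C - comp ` L"
        by (auto simp: mem_restrict)
      show ?thesis unfolding Der_def
      proof (simp, rule up_lit_intro[OF C(1)])
        show "l \<in> C" using C(3) by auto
        fix l' assume "l' \<in> C" "l' \<noteq> l"
        then have "l' \<in> comp ` L" using C(3) by auto
        then have "comp l' \<in> L" by auto
        then show "up_lit G (comp l')" using L(3) unfolding Der_def by auto
      qed
    qed
    have fV: "finite (Var ?Gk)" using L(1) fin_restrict[OF assms] finite_Var by metis
    have "Var (restrict ?Gk {l}) \<subseteq> Var ?Gk - {var l}" using Var_restrict[of ?Gk "{l}"] by auto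
    moreover have "var l \<in> Var ?Gk" using l(1) unfolding Var_def by auto
    ultimately have "Var (restrict ?Gk {l}) \<subset> Var ?Gk" by blast
    then have lt: "card (Var (restrict ?Gk {l})) < card (Var ?Gk)"
      by (rule psubset_card_mono[OF fV])
    have st: "(up_step ^^ Suc k) G = restrict ?Gk {l}" using l(2) by simp
    have "card (Var ?Gk) + k \<le> card (Var G)" using L(4) False by blast
    then have "card (Var ((up_step ^^ Suc k) G)) + Suc k \<le> card (Var G)"
      using lt unfolding st by linarith
    moreover have "insert l L \<subseteq> Der G" using \<open>l \<in> Der G\<close> L(3) by auto
    ultimately show ?thesis using eq cons by blast
  qed
qed

lemma U_props:
  assumes "fin G"
  shows "\<exists>L. U G = restrict G L \<and> consistent L \<and> L \<subseteq> Der G \<and> stable (U G)"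
  using iter_inv[OF assms, of "Suc (card (Var G))"] unfolding U_def by auto

lemma fin_U: "fin G \<Longrightarrow> fin (U G)"
  using U_props fin_restrict by metis

lemma U_idem: "fin G \<Longrightarrow> U (U G) = U G"
  using U_props stable_up_step funpow_fix unfolding U_def by metis

lemma Der_consistent: "\<not> refuted G \<Longrightarrow> consistent (Der G)"
  unfolding consistent_def Der_def
proof (clarsimp)
  fix l assume nr: "\<not> refuted G" and a: "up_lit G l" "up_lit G (comp l)"
  from a(1) show False
  proof cases
    case (1 C)
    then have "\<forall>l'\<in>C. up_lit G (comp l')" using a(2) by auto
    with 1 nr show False unfolding refuted_def by auto
  qed
qed

lemma Der_sub_L:
  assumes "U G = restrict G L" "consistent L" "stable (U G)" "{} \<notin> U G"
  shows "up_lit G l \<Longrightarrow> l \<in> L"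
proof (induction rule: up_lit.induct)
  case (1 C l)
  show ?case
  proof (rule ccontr)
    assume nl: "l \<notin> L"
    have oth: "comp l' \<in> L" if "l' \<in> C" "l' \<noteq> l" for l' using 1(3) that by auto
    have "C \<inter> L = {}"
    proof (rule ccontr)
      assume "C \<inter> L \<noteq> {}"
      then obtain l'' where "l'' \<in> C" "l'' \<in> L" by auto
      with nl have "l'' \<noteq> l" by auto
      with oth \<open>l'' \<in> C\<close> have "comp l'' \<in> L" by auto
      with \<open>l'' \<in> L\<close> assms(2) show False unfolding consistent_def by auto
    qed
    then have inU: "C - comp ` L \<in> U G" using assms(1) 1(1) by (auto simp: mem_restrict)
    have "C - comp ` L \<subseteq> {l}"
    proof
      fix x assume "x \<in> C - comp ` L"
      then show "x \<in> {l}" using oth by (metis DiffD1 DiffD2 comp_comp image_eqI singleton_iff)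
    qed
    then have "C - comp ` L = {} \<or> C - comp ` L = {l}" by auto
    then show False
    proof
      assume "C - comp ` L = {}" with inU assms(4) show False by simp
    next
      assume "C - comp ` L = {l}" with inU assms(3,4) show False unfolding stable_def by auto
    qed
  qed
qed

lemma U_conflict_iff:
  assumes "fin G"
  shows "{} \<in> U G \<longleftrightarrow> refuted G"
proof -
  obtain L where L: "U G = restrict G L" "consistent L" "L \<subseteq> Der G" "stable (U G)"
    using U_props[OF assms] by blast
  show ?thesis
  proof
    assume "{} \<in> U G"
    then obtain C where C: "C \<in> G" "C \<inter> L = {}" "{} = C - comp ` L" using L(1) by (auto simp: mem_restrict)
    have "\<forall>l\<in>C. up_lit G (comp l)"
    proof
      fix l assume "l \<in> C"
      then have "comp l \<in> L" using C(3) by (metis Diff_iff comp_in_image empty_iff comp_comp)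
      then show "up_lit G (comp l)" using L(3) unfolding Der_def by auto
    qed
    then show "refuted G" using C(1) unfolding refuted_def by auto
  next
    assume r: "refuted G"
    show "{} \<in> U G"
    proof (rule ccontr)
      assume ne: "{} \<notin> U G"
      from r obtain C where C: "C \<in> G" "\<forall>l\<in>C. up_lit G (comp l)" unfolding refuted_def by auto
      have cl: "\<forall>l\<in>C. comp l \<in> L" using C(2) Der_sub_L[OF L(1,2,4) ne] by auto
      have "C \<inter> L = {}" using cl L(2) unfolding consistent_def by auto
      moreover have "C - comp ` L = {}" using cl by (auto, metis comp_comp image_eqI)
      ultimately have "{} \<in> U G" using C(1) L(1) by (auto simp: mem_restrict)
      with ne show False by simp
    qed
  qed
qed

lemma U_Der:
  assumes "fin G" "\<not> refuted G"
  shows "U G = restrict G (Der G)"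
proof -
  obtain L where L: "U G = restrict G L" "consistent L" "L \<subseteq> Der G" "stable (U G)"
    using U_props[OF assms(1)] by blast
  have ne: "{} \<notin> U G" using U_conflict_iff[OF assms(1)] assms(2) by simp
  have "Der G \<subseteq> L" using Der_sub_L[OF L(1,2,4) ne] unfolding Der_def by auto
  with L show ?thesis by auto
qed

lemma Var_U: "fin G \<Longrightarrow> Var (U G) \<subseteq> Var G"
  using U_props Var_restrict by (metis Diff_subset subset_trans)

lemma uequiv_refl: "uequiv G G" unfolding uequiv_def by auto
lemma uequiv_sym: "uequiv G G' \<Longrightarrow> uequiv G' G" unfolding uequiv_def by auto
lemma uequiv_trans: "uequiv G G' \<Longrightarrow> uequiv G' G'' \<Longrightarrow> uequiv G G''" unfolding uequiv_def by auto

lemma dmst_equiv: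
  assumes "fin G" "fin G'" "uequiv G G'" "is_dmst Bv G T"
  shows "is_dmst Bv G' T"
  using assms(4)
proof cases
  case dmst_E
  then show ?thesis using assms U_conflict_iff unfolding uequiv_def by (metis is_dmst.dmst_E)
next
  case (dmst_N x T1 T2)
  then have "\<not> refuted G" using U_conflict_iff[OF assms(1)] by simp
  then have "U G = U G'" using assms(3) unfolding uequiv_def by auto
  then show ?thesis using dmst_N by (auto intro: is_dmst.dmst_N)
qed

lemma uequiv_U: "fin G \<Longrightarrow> uequiv G (U G)"
  unfolding uequiv_def using U_idem U_conflict_iff fin_U by metis



lemma R_a:
  assumes "up_lit (restrict G K) l" "\<forall>k\<in>K. up_lit G k"
  shows "up_lit G l"
  using assms(1)
proof (induction rule: up_lit.induct)
  case (1 C' l)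
  from 1(1) obtain C where C: "C \<in> G" "C \<inter> K = {}" "C' = C - comp ` K" by (auto simp: mem_restrict)
  show ?case
  proof (rule up_lit_intro[OF C(1)])
    show "l \<in> C" using 1(2) C(3) by auto
    fix l' assume l': "l' \<in> C" "l' \<noteq> l"
    show "up_lit G (comp l')"
    proof (cases "l' \<in> comp ` K")
      case True
      then have "comp l' \<in> K" by auto
      then show ?thesis using assms(2) by auto
    next
      case False
      then have "l' \<in> C' - {l}" using l' C(3) by auto
      then show ?thesis using 1(3) by auto
    qed
  qed
qed

lemma R_b':
  assumes "\<forall>k\<in>K. \<not> up_lit G (comp k)"
  shows "up_lit G l \<Longrightarrow> l \<in> K \<or> up_lit (restrict G K) l"
proof (induction rule: up_lit.induct)
  case (1 C l)
  have ul: "up_lit G l" using 1 by (intro up_lit.intros[OF 1(1,2)]) auto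
  show ?case
  proof (cases "l \<in> K")
    case False
    have CK: "C \<inter> K = {}"
    proof (rule ccontr)
      assume "C \<inter> K \<noteq> {}"
      then obtain l'' where "l'' \<in> C" "l'' \<in> K" by auto
      with False have "l'' \<in> C - {l}" by auto
      with 1(3) have "up_lit G (comp l'')" by auto
      with assms \<open>l'' \<in> K\<close> show False by auto
    qed
    have "l \<notin> comp ` K"
    proof
      assume "l \<in> comp ` K"
      then obtain k where "k \<in> K" "l = comp k" by auto
      with ul assms show False by auto
    qed
    have "up_lit (restrict G K) l"
    proof (rule up_lit_intro)
      show "C - comp ` K \<in> restrict G K" using 1(1) CK by (auto simp: mem_restrict)
      show "l \<in> C - comp ` K" using 1(2) \<open>l \<notin> comp ` K\<close> by auto
      fix l' assume l': "l' \<in> C - comp ` K" "l' \<noteq> l"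
      then have "comp l' \<notin> K" by (metis DiffD2 comp_comp image_eqI)
      with l' 1(3) show "up_lit (restrict G K) (comp l')" by auto
    qed
    then show ?thesis by auto
  qed auto
qed

lemma R_b:
  assumes "K \<subseteq> Der G" "consistent K"
  shows "up_lit G l \<Longrightarrow> l \<in> K \<or> up_lit (restrict G K) l \<or> refuted (restrict G K)"
proof (induction rule: up_lit.induct)
  case (1 C l)
  show ?case
  proof (cases "refuted (restrict G K) \<or> l \<in> K")
    case True then show ?thesis by auto
  next
    case False
    then have nr: "\<not> refuted (restrict G K)" and nl: "l \<notin> K" by auto
    have oth: "comp l' \<in> K \<or> up_lit (restrict G K) (comp l')" if "l' \<in> C" "l' \<noteq> l" for l'
      using 1(3) that nr by auto
    have CK: "C \<inter> K = {}"
    proof (rule ccontr)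
      assume "C \<inter> K \<noteq> {}"
      then obtain l'' where "l'' \<in> C" "l'' \<in> K" by auto
      with nl have "l'' \<noteq> l" by auto
      with oth \<open>l'' \<in> C\<close> have "comp l'' \<in> K \<or> up_lit (restrict G K) (comp l'')" by auto
      then show False
      proof
        assume "comp l'' \<in> K" with \<open>l'' \<in> K\<close> assms(2) show False unfolding consistent_def by auto
      next
        assume "up_lit (restrict G K) (comp l'')"
        then have "var l'' \<notin> var ` K" using up_lit_restrict_var by fastforce
        with \<open>l'' \<in> K\<close> show False by auto
      qed
    qed
    have inR: "C - comp ` K \<in> restrict G K" using 1(1) CK by (auto simp: mem_restrict)
    have oth2: "up_lit (restrict G K) (comp x)" if "x \<in> C - comp ` K" "x \<noteq> l" for x
    proof -
      have "comp x \<notin> K" using that(1) by (metis DiffD2 comp_comp image_eqI)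
      with oth that show ?thesis by auto
    qed
    show ?thesis
    proof (cases "l \<in> comp ` K")
      case True
      then have "\<forall>x\<in>C - comp ` K. up_lit (restrict G K) (comp x)" using oth2 by auto
      then have "refuted (restrict G K)" using inR unfolding refuted_def by auto
      with nr show ?thesis by auto
    next
      case False
      have "up_lit (restrict G K) l"
        by (rule up_lit_intro[OF inR]) (use False 1(2) oth2 in auto)
      then show ?thesis by auto
    qed
  qed
qed

lemma refuted_restrict_iff:
  assumes "K \<subseteq> Der G" "consistent K"
  shows "refuted G \<longleftrightarrow> refuted (restrict G K)"
proof
  assume "refuted G"
  then obtain C where C: "C \<in> G" "\<forall>l\<in>C. up_lit G (comp l)" unfolding refuted_def by auto
  show "refuted (restrict G K)"
  proof (rule ccontr)
    assume nr: "\<not> refuted (restrict G K)"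
    have h: "comp l \<in> K \<or> up_lit (restrict G K) (comp l)" if "l \<in> C" for l
      using R_b[OF assms C(2)[rule_format, OF that]] nr by auto
    have CK: "C \<inter> K = {}"
    proof (rule ccontr)
      assume "C \<inter> K \<noteq> {}"
      then obtain l'' where "l'' \<in> C" "l'' \<in> K" by auto
      with h have "comp l'' \<in> K \<or> up_lit (restrict G K) (comp l'')" by auto
      then show False
      proof
        assume "comp l'' \<in> K" with \<open>l'' \<in> K\<close> assms(2) show False unfolding consistent_def by auto
      next
        assume "up_lit (restrict G K) (comp l'')"
        then have "var l'' \<notin> var ` K" using up_lit_restrict_var by fastforce
        with \<open>l'' \<in> K\<close> show False by auto
      qed
    qed
    have inR: "C - comp ` K \<in> restrict G K" using C(1) CK by (auto simp: mem_restrict)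
    have "\<forall>x\<in>C - comp ` K. up_lit (restrict G K) (comp x)"
    proof
      fix x assume x: "x \<in> C - comp ` K"
      then have "comp x \<notin> K" by (metis DiffD2 comp_comp image_eqI)
      with h x show "up_lit (restrict G K) (comp x)" by auto
    qed
    with inR nr show False unfolding refuted_def by auto
  qed
next
  assume "refuted (restrict G K)"
  then obtain C' where C': "C' \<in> restrict G K" "\<forall>l\<in>C'. up_lit (restrict G K) (comp l)"
    unfolding refuted_def by auto
  from C'(1) obtain C where C: "C \<in> G" "C \<inter> K = {}" "C' = C - comp ` K" by (auto simp: mem_restrict)
  have kd: "\<forall>k\<in>K. up_lit G k" using assms(1) unfolding Der_def by auto
  have "\<forall>l\<in>C. up_lit G (comp l)"
  proof
    fix l assume "l \<in> C"
    show "up_lit G (comp l)"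
    proof (cases "l \<in> comp ` K")
      case True
      then have "comp l \<in> K" by auto
      with kd show ?thesis by auto
    next
      case False
      with \<open>l \<in> C\<close> C(3) C'(2) have "up_lit (restrict G K) (comp l)" by auto
      from R_a[OF this kd] show ?thesis .
    qed
  qed
  with C(1) show "refuted G" unfolding refuted_def by auto
qed

lemma L_inv:
  assumes "fin G" "K \<subseteq> Der G" "consistent K"
  shows "uequiv G (restrict G K)"
proof -
  have ri: "refuted G \<longleftrightarrow> refuted (restrict G K)" by (rule refuted_restrict_iff[OF assms(2,3)])
  have "U G = U (restrict G K)" if nr: "\<not> refuted G"
  proof -
    have nr': "\<not> refuted (restrict G K)" using ri nr by simp
    have kd: "\<forall>k\<in>K. up_lit G k" using assms(2) unfolding Der_def by auto
    have DG: "Der G = K \<union> Der (restrict G K)"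
    proof
      show "Der G \<subseteq> K \<union> Der (restrict G K)"
        using R_b[OF assms(2,3)] nr' unfolding Der_def by auto
      show "K \<union> Der (restrict G K) \<subseteq> Der G"
        using assms(2) R_a[OF _ kd] unfolding Der_def by auto
    qed
    have nk: "\<forall>k\<in>K. comp k \<notin> Der (restrict G K)"
    proof (intro ballI notI)
      fix k assume "k \<in> K" "comp k \<in> Der (restrict G K)"
      then have "var (comp k) \<notin> var ` K" using up_lit_restrict_var unfolding Der_def by blast
      with \<open>k \<in> K\<close> show False by simp
    qed
    have "restrict G (Der G) = restrict (restrict G K) (Der (restrict G K))"
      using restrict_restrict[OF nk, of G] DG by simp
    then show ?thesis using U_Der[OF assms(1) nr] U_Der[OF fin_restrict[OF assms(1)] nr'] by simp
  qed
  with ri show ?thesis unfolding uequiv_def by auto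
qed

lemma child_equiv:
  assumes "fin G" "\<not> refuted G" "var l \<in> Var (U G)"
  shows "uequiv (restrict (U G) {l}) (restrict G {l})"
proof -
  let ?D = "Der G"
  have UG: "U G = restrict G ?D" by (rule U_Der[OF assms(1,2)])
  have vl: "var l \<notin> var ` ?D" using assms(3) Var_restrict[of G ?D] UG by auto
  have e1: "restrict (U G) {l} = restrict G (?D \<union> {l})"
    unfolding UG using vl by (intro restrict_restrict) (metis image_eqI singletonD var_comp)
  have e2: "restrict (restrict G {l}) ?D = restrict G ({l} \<union> ?D)"
    using vl by (intro restrict_restrict) (metis image_eqI singletonD var_comp)
  have nc: "\<forall>k\<in>{l}. \<not> up_lit G (comp k)" using vl unfolding Der_def by (metis image_eqI mem_Collect_eq singletonD var_comp)
  have "?D \<subseteq> Der (restrict G {l})"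
  proof
    fix d assume "d \<in> ?D"
    then have "d \<noteq> l" using vl by auto
    with R_b'[OF nc] \<open>d \<in> ?D\<close> show "d \<in> Der (restrict G {l})" unfolding Der_def by auto
  qed
  from L_inv[OF fin_restrict[OF assms(1)] this Der_consistent[OF assms(2)]]
  have "uequiv (restrict G {l}) (restrict (restrict G {l}) ?D)" .
  then show ?thesis using e1 e2 uequiv_sym by (metis sup_commute)
qed

lemma E_lemma:
  assumes "fin G" "\<not> refuted G" "var l \<notin> var ` Der G" "var l \<notin> Var (U G)"
  shows "uequiv G (restrict G {l}) \<and> Der (restrict G {l}) = Der G"
proof -
  let ?D = "Der G"
  let ?Gl = "restrict G {l}"
  have UG: "U G = restrict G ?D" by (rule U_Der[OF assms(1,2)])
  have cons: "consistent ?D" by (rule Der_consistent[OF assms(2)])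
  have key: "C \<inter> ?D \<noteq> {}" if "C \<in> G" "comp l \<in> C" for C
  proof
    assume "C \<inter> ?D = {}"
    then have "C - comp ` ?D \<in> U G" using UG that(1) by (auto simp: mem_restrict)
    moreover have "comp l \<in> C - comp ` ?D" using that(2) assms(3)
      by (metis DiffI image_iff var_comp)
    ultimately have "var l \<in> Var (U G)" unfolding Var_def by (metis UnionI image_eqI var_comp)
    with assms(4) show False by simp
  qed
  have sub1: "up_lit ?Gl l' \<Longrightarrow> l' \<in> ?D" for l'
  proof (induction rule: up_lit.induct)
    case (1 C' l')
    from 1(1) obtain C where C: "C \<in> G" "C \<inter> {l} = {}" "C' = C - comp ` {l}" by (auto simp: mem_restrict)
    show ?case
    proof (cases "comp l \<in> C")
      case False
      then have "C' = C" using C(3) by auto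
      have "up_lit G l'"
        by (rule up_lit_intro[OF C(1)]) (use 1(2,3) \<open>C' = C\<close> in \<open>auto simp: Der_def\<close>)
      then show ?thesis unfolding Der_def by auto
    next
      case True
      then obtain l'' where l'': "l'' \<in> C" "l'' \<in> ?D" using key C(1) by auto
      have "l'' \<noteq> comp l" using l''(2) assms(3) by (metis image_eqI var_comp)
      then have "l'' \<in> C'" using C(3) l''(1) by auto
      show ?thesis
      proof (cases "l'' = l'")
        case True then show ?thesis using l'' by auto
      next
        case False
        with \<open>l'' \<in> C'\<close> 1(3) have "comp l'' \<in> ?D" by auto
        with l''(2) cons show ?thesis unfolding consistent_def by auto
      qed
    qed
  qed
  have nc: "\<forall>k\<in>{l}. \<not> up_lit G (comp k)" using assms(3) unfolding Der_def by (metis image_eqI mem_Collect_eq singletonD var_comp)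
  have sub2: "?D \<subseteq> Der ?Gl"
  proof
    fix d assume "d \<in> ?D"
    then have "d \<noteq> l" using assms(3) by auto
    with R_b'[OF nc] \<open>d \<in> ?D\<close> show "d \<in> Der ?Gl" unfolding Der_def by auto
  qed
  have DD: "Der ?Gl = ?D" using sub1 sub2 unfolding Der_def by auto
  have nr: "\<not> refuted ?Gl"
  proof
    assume "refuted ?Gl"
    then obtain C' where C': "C' \<in> ?Gl" "\<forall>x\<in>C'. up_lit ?Gl (comp x)" unfolding refuted_def by auto
    from C'(1) obtain C where C: "C \<in> G" "C \<inter> {l} = {}" "C' = C - comp ` {l}" by (auto simp: mem_restrict)
    have cd: "\<forall>x\<in>C'. comp x \<in> ?D" using C'(2) sub1 by auto
    show False
    proof (cases "comp l \<in> C")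
      case False
      then have "C' = C" using C(3) by auto
      then have "\<forall>x\<in>C. up_lit G (comp x)" using cd unfolding Der_def by auto
      with C(1) assms(2) show False unfolding refuted_def by auto
    next
      case True
      then obtain l'' where l'': "l'' \<in> C" "l'' \<in> ?D" using key C(1) by auto
      have "l'' \<noteq> comp l" using l''(2) assms(3) by (metis image_eqI var_comp)
      then have "l'' \<in> C'" using C(3) l''(1) by auto
      with cd l''(2) cons show False unfolding consistent_def by auto
    qed
  qed
  have "U ?Gl = restrict ?Gl ?D" using U_Der[OF fin_restrict[OF assms(1)] nr] DD by simp
  also have "\<dots> = restrict G ({l} \<union> ?D)"
    using assms(3) by (intro restrict_restrict) (metis image_eqI singletonD var_comp)
  also have "\<dots> = restrict (restrict G ?D) {l}"
  proof -
    have "\<forall>i\<in>?D. comp i \<notin> {l}" using assms(3) by (metis image_eqI singletonD var_comp)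
    from restrict_restrict[OF this, of G] show ?thesis by (simp add: Un_commute)
  qed
  also have "\<dots> = restrict G ?D"
    using assms(4) UG by (intro restrict_novar) simp
  finally have "U ?Gl = U G" using UG by simp
  then show ?thesis using nr assms(2) DD unfolding uequiv_def by auto
qed

lemma dmst_labels:
  "is_dmst Bv G T \<Longrightarrow> fin G \<Longrightarrow> labels T \<subseteq> Bv \<inter> Var G"
proof (induction rule: is_dmst.induct)
  case (dmst_E F B) then show ?case by simp
next
  case (dmst_N F x B T1 T2)
  have fU: "fin (U F)" using fin_U[OF dmst_N(7)] .
  have v: "Var (U F) \<subseteq> Var F" using Var_U[OF dmst_N(7)] .
  have f1: "fin (U (restrict (U F) {Neg x}))" by (rule fin_U[OF fin_restrict[OF fU]])
  have f2: "fin (U (restrict (U F) {Pos x}))" by (rule fin_U[OF fin_restrict[OF fU]])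
  have "labels T1 \<subseteq> B \<inter> Var (U (restrict (U F) {Neg x}))" using dmst_N.IH(1) f1 by blast
  moreover have "Var (U (restrict (U F) {Neg x})) \<subseteq> Var F"
    using Var_U[OF fin_restrict[OF fU]] Var_restrict[of "U F" "{Neg x}"] v by blast
  moreover have "labels T2 \<subseteq> B \<inter> Var (U (restrict (U F) {Pos x}))" using dmst_N.IH(2) f2 by blast
  moreover have "Var (U (restrict (U F) {Pos x})) \<subseteq> Var F"
    using Var_U[OF fin_restrict[OF fU]] Var_restrict[of "U F" "{Pos x}"] v by blast
  ultimately show ?case using dmst_N(2) v by auto
qed



lemma var_map_Old[simp]: "var (map_lit Old k) = Old (var k)"
  by (cases k) auto
lemma comp_map_Old[simp]: "comp (map_lit Old k) = map_lit Old (comp k)"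
  by (cases k) auto
lemma map_Old_inj[simp]: "(map_lit Old k = map_lit Old k') \<longleftrightarrow> k = k'"
  by (cases k; cases k') auto

lemma child_dmst:
  assumes "fin G" "\<not> refuted G" "var l \<in> Var (U G)" "is_dmst Bv (restrict G {l}) T"
  shows "is_dmst Bv (U (restrict (U G) {l})) T"
proof -
  have f1: "fin (restrict (U G) {l})" using fin_restrict fin_U assms(1) by blast
  have "uequiv (restrict G {l}) (U (restrict (U G) {l}))"
    using uequiv_trans[OF uequiv_sym[OF child_equiv[OF assms(1-3)]] uequiv_U[OF f1]] .
  then show ?thesis using dmst_equiv assms(4) fin_restrict fin_U assms(1) f1 by blast
qed

lemma child_dmst_rev:
  assumes "fin G" "\<not> refuted G" "var l \<in> Var (U G)" "is_dmst Bv (U (restrict (U G) {l})) T"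
  shows "is_dmst Bv (restrict G {l}) T"
proof -
  have f1: "fin (restrict (U G) {l})" using fin_restrict fin_U assms(1) by blast
  have "uequiv (restrict G {l}) (U (restrict (U G) {l}))"
    using uequiv_trans[OF uequiv_sym[OF child_equiv[OF assms(1-3)]] uequiv_U[OF f1]] .
  then show ?thesis using dmst_equiv[OF _ _ uequiv_sym] assms(4) fin_restrict fin_U assms(1) f1 by blast
qed

locale setting =
  fixes F :: "'a cnf" and X Y Z :: "'a set" and n :: nat and xv :: "nat \<Rightarrow> 'a"
  assumes finF: "finite F" and finC: "\<forall>C\<in>F. finite C"
    and VarF: "Var F \<subseteq> X \<union> Y \<union> Z"
    and XY: "X \<inter> Y = {}" and XZ: "X \<inter> Z = {}" and YZ: "Y \<inter> Z = {}"
    and injx: "inj_on xv {1..n}" and Xdef: "X = xv ` {1..n}"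
    and unsat: "\<not> satisfiable F"
    and Zhyp: "\<forall>\<alpha>. \<forall>z\<in>Z. up_lit (restrict F (assign_lits \<alpha> (X \<union> Y))) (Pos z)
                   \<or> up_lit (restrict F (assign_lits \<alpha> (X \<union> Y))) (Neg z)"
begin

abbreviation "H \<equiv> cX F n xv"
abbreviation "Bs \<equiv> Old ` (X \<union> Y)"
abbreviation "NV \<equiv> {Neg (V i) | i. i \<in> {1..n}}"

definition Jok :: "'a ext lit set \<Rightarrow> bool" where
  "Jok J \<longleftrightarrow> (\<forall>l\<in>J. var l \<in> Old ` (X \<union> Y)) \<and> consistent J"

definition UA :: "'a ext lit set \<Rightarrow> 'a set" where
  "UA J = {x\<in>X. Old x \<notin> var ` J}"

definition SJ :: "'a ext lit set \<Rightarrow> 'a ext lit set" where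
  "SJ J = {Pos (V i) | i. i \<in> {1..n} \<and> Old (xv i) \<in> var ` J}"

lemma memH: "C \<in> H \<longleftrightarrow> (\<exists>\<gamma>. C = map_lit Old ` \<gamma> \<union> {Neg A, Neg B} \<and> \<gamma> \<in> F)
   \<or> (\<exists>i. C = {Neg (Old (xv i)), Pos (V i)} \<and> i \<in> {1..n})
   \<or> (\<exists>i. C = {Pos (Old (xv i)), Pos (V i)} \<and> i \<in> {1..n})
   \<or> C = insert (Pos A) NV \<or> C = insert (Pos B) NV"
  unfolding cX_def Un_iff mem_Collect_eq singleton_iff disj_assoc by (rule refl)

lemma NV_eq: "NV = (\<lambda>i. Neg (V i)) ` {1..n}" by auto

lemma finH: "fin H"
proof -
  have fNV: "finite NV" unfolding NV_eq by simp
  have "finite H" unfolding cX_def Setcompr_eq_image using finF by simp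
  moreover have "finite C" if "C \<in> H" for C
    using that unfolding memH
  proof (elim disjE exE conjE)
    fix \<gamma> assume "\<gamma> \<in> F" "C = map_lit Old ` \<gamma> \<union> {Neg A, Neg B}"
    then show ?thesis using finC by auto
  qed (use fNV in auto)
  ultimately show ?thesis unfolding fin_def by auto
qed

lemma Jok_var: "Jok J \<Longrightarrow> l \<in> J \<Longrightarrow> \<exists>w\<in>X \<union> Y. var l = Old w"
  unfolding Jok_def by auto

lemma nonOld_notin: "Jok J \<Longrightarrow> var k \<notin> range Old \<Longrightarrow> k \<notin> J \<and> k \<notin> comp ` J"
proof -
  assume J: "Jok J" and k: "var k \<notin> range Old"
  have "var j \<in> range Old" if "j \<in> J" for j using J that unfolding Jok_def by auto
  then show ?thesis using k by (metis image_iff var_comp)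
qed

lemma nonOld_simps[simp]: "A \<notin> range Old" "B \<notin> range Old" "V i \<notin> range Old"
  by auto

lemma mem_restrictI: "C \<in> G \<Longrightarrow> C \<inter> K = {} \<Longrightarrow> C' = C - comp ` K \<Longrightarrow> C' \<in> restrict G K"
  unfolding mem_restrict by blast

lemma UA_E: "x0 \<in> UA J \<Longrightarrow> (\<And>i0. i0 \<in> {1..n} \<Longrightarrow> x0 = xv i0 \<Longrightarrow> Old x0 \<notin> var ` J \<Longrightarrow> thesis) \<Longrightarrow> thesis"
proof -
  assume x0: "x0 \<in> UA J" and h: "\<And>i0. i0 \<in> {1..n} \<Longrightarrow> x0 = xv i0 \<Longrightarrow> Old x0 \<notin> var ` J \<Longrightarrow> thesis"
  from x0 have "x0 \<in> X" "Old x0 \<notin> var ` J" unfolding UA_def by auto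
  then show thesis using h Xdef by blast
qed

lemma SJ_mem: "k \<in> SJ J \<longleftrightarrow> (\<exists>i\<in>{1..n}. k = Pos (V i) \<and> Old (xv i) \<in> var ` J)"
  unfolding SJ_def by blast

lemma SJ_PosV: "Pos (V i) \<in> SJ J \<Longrightarrow> i \<in> {1..n} \<Longrightarrow> Old (xv i) \<in> var ` J"
  unfolding SJ_mem by auto

lemma Old_notin_var: "Old w \<notin> var ` J \<Longrightarrow> Pos (Old w) \<notin> J \<and> Neg (Old w) \<notin> J \<and> Pos (Old w) \<notin> comp ` J \<and> Neg (Old w) \<notin> comp ` J"
  by (auto simp: image_iff) (metis var.simps var_comp)+

lemma PL_der:
  assumes J: "Jok J" and x0: "x0 \<in> UA J"
  shows "up_lit (restrict H J) l \<Longrightarrow> l \<in> SJ J"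
proof (induction rule: up_lit.induct)
  case (1 C l)
  from 1(1) obtain C0 where C0: "C0 \<in> H" "C0 \<inter> J = {}" "C = C0 - comp ` J" by (auto simp: mem_restrict)
  have oth: "comp l' \<in> SJ J" if "l' \<in> C" "l' \<noteq> l" for l' using 1(3) that by auto
  have inC: "k \<in> C" if "k \<in> C0" "var k \<notin> range Old" for k
    using nonOld_notin[OF J that(2)] that(1) C0(3) by auto
  from C0(1) show ?case unfolding memH
  proof (elim disjE exE conjE)
    fix \<gamma> assume c: "C0 = map_lit Old ` \<gamma> \<union> {Neg A, Neg B}"
    have "Neg A \<in> C" "Neg B \<in> C" using inC[of "Neg A"] inC[of "Neg B"] c by auto
    then show ?thesis using oth[of "Neg A"] oth[of "Neg B"] by (auto simp: SJ_mem)
  next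
    fix i assume i: "i \<in> {1..n}" and c: "C0 = {Neg (Old (xv i)), Pos (V i)}"
    have pv: "Pos (V i) \<in> C" using inC c by auto
    then have l: "l = Pos (V i)" using oth[of "Pos (V i)"] by (auto simp: SJ_mem)
    have "Old (xv i) \<in> var ` J"
    proof (rule ccontr)
      assume nv: "Old (xv i) \<notin> var ` J"
      have "Neg (Old (xv i)) \<notin> comp ` J" using Old_notin_var[OF nv] by blast
      then have "Neg (Old (xv i)) \<in> C" using C0(3) c by simp
      then show False using oth[of "Neg (Old (xv i))"] l by (auto simp: SJ_mem)
    qed
    then show ?thesis using l i by (auto simp: SJ_mem)
  next
    fix i assume i: "i \<in> {1..n}" and c: "C0 = {Pos (Old (xv i)), Pos (V i)}"
    have pv: "Pos (V i) \<in> C" using inC c by auto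
    then have l: "l = Pos (V i)" using oth[of "Pos (V i)"] by (auto simp: SJ_mem)
    have "Old (xv i) \<in> var ` J"
    proof (rule ccontr)
      assume nv: "Old (xv i) \<notin> var ` J"
      have "Pos (Old (xv i)) \<notin> comp ` J" using Old_notin_var[OF nv] by blast
      then have "Pos (Old (xv i)) \<in> C" using C0(3) c by simp
      then show False using oth[of "Pos (Old (xv i))"] l by (auto simp: SJ_mem)
    qed
    then show ?thesis using l i by (auto simp: SJ_mem)
  next
    assume c: "C0 = insert (Pos A) NV"
    have pa: "Pos A \<in> C" using inC c by auto
    then have l: "l = Pos A" using oth[of "Pos A"] by (auto simp: SJ_mem)
    from x0 obtain i0 where i0: "i0 \<in> {1..n}" "x0 = xv i0" "Old x0 \<notin> var ` J"
      by (rule UA_E)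
    have "Neg (V i0) \<in> C" using inC c i0 by auto
    then have "Pos (V i0) \<in> SJ J" using oth[of "Neg (V i0)"] l by auto
    then show ?thesis using SJ_PosV i0 by auto
  next
    assume c: "C0 = insert (Pos B) NV"
    have pa: "Pos B \<in> C" using inC c by auto
    then have l: "l = Pos B" using oth[of "Pos B"] by (auto simp: SJ_mem)
    from x0 obtain i0 where i0: "i0 \<in> {1..n}" "x0 = xv i0" "Old x0 \<notin> var ` J"
      by (rule UA_E)
    have "Neg (V i0) \<in> C" using inC c i0 by auto
    then have "Pos (V i0) \<in> SJ J" using oth[of "Neg (V i0)"] l by auto
    then show ?thesis using SJ_PosV i0 by auto
  qed
qed

lemma PL_nr:
  assumes J: "Jok J" and x0: "x0 \<in> UA J"
  shows "\<not> refuted (restrict H J)"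
proof
  assume "refuted (restrict H J)"
  then obtain C where C: "C \<in> restrict H J" "\<forall>l\<in>C. comp l \<in> SJ J"
    unfolding refuted_def using PL_der[OF J x0] by blast
  from C(1) obtain C0 where C0: "C0 \<in> H" "C0 \<inter> J = {}" "C = C0 - comp ` J" by (auto simp: mem_restrict)
  have inC: "k \<in> C" if "k \<in> C0" "var k \<notin> range Old" for k
    using nonOld_notin[OF J that(2)] that(1) C0(3) by auto
  from C0(1) show False unfolding memH
  proof (elim disjE exE conjE)
    fix \<gamma> assume c: "C0 = map_lit Old ` \<gamma> \<union> {Neg A, Neg B}"
    have "Neg A \<in> C" using inC[of "Neg A"] c by auto
    then show False using C(2) by (auto simp: SJ_mem)
  next
    fix i assume "C0 = {Neg (Old (xv i)), Pos (V i)}"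
    then have "Pos (V i) \<in> C" using inC by auto
    then show False using C(2) by (auto simp: SJ_mem)
  next
    fix i assume "C0 = {Pos (Old (xv i)), Pos (V i)}"
    then have "Pos (V i) \<in> C" using inC by auto
    then show False using C(2) by (auto simp: SJ_mem)
  next
    assume "C0 = insert (Pos A) NV"
    then have "Pos A \<in> C" using inC by auto
    then show False using C(2) by (auto simp: SJ_mem)
  next
    assume "C0 = insert (Pos B) NV"
    then have "Pos B \<in> C" using inC by auto
    then show False using C(2) by (auto simp: SJ_mem)
  qed
qed

lemma PL_var:
  assumes J: "Jok J" and x0: "x0 \<in> UA J"
  shows "Old x0 \<in> Var (U (restrict H J))"
proof -
  let ?G = "restrict H J"
  let ?D = "Der ?G"
  have fG: "fin ?G" using fin_restrict finH by blast
  have UG: "U ?G = restrict ?G ?D" using U_Der[OF fG PL_nr[OF J x0]] .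
  have DS: "?D \<subseteq> SJ J" using PL_der[OF J x0] unfolding Der_def by auto
  from x0 obtain i0 where i0: "i0 \<in> {1..n}" "x0 = xv i0" "Old x0 \<notin> var ` J"
    by (rule UA_E)
  let ?c = "{Neg (Old x0), Pos (V i0)}"
  have "?c \<in> H" using i0 unfolding memH by auto
  moreover have "?c \<inter> J = {}" "?c - comp ` J = ?c"
    using Old_notin_var[OF i0(3)] nonOld_notin[OF J, of "Pos (V i0)"] by auto
  ultimately have c1: "?c \<in> ?G" by (intro mem_restrictI[of ?c]) auto
  have "Pos (V i0) \<notin> ?D" using DS SJ_PosV i0 by blast
  moreover have "Neg (Old x0) \<notin> ?D" using DS by (auto simp: SJ_mem)
  ultimately have "?c \<inter> ?D = {}" by auto
  moreover have "?c - comp ` ?D = ?c"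
  proof -
    have "\<forall>d\<in>?D. \<exists>i. d = Pos (V i)"
    proof
      fix d assume "d \<in> ?D"
      then have "d \<in> SJ J" using DS by auto
      then show "\<exists>i. d = Pos (V i)" unfolding SJ_mem by auto
    qed
    then have "\<forall>d\<in>?D. comp d \<noteq> Neg (Old x0) \<and> comp d \<noteq> Pos (V i0)"
      by fastforce
    then show ?thesis by auto
  qed
  ultimately have "?c \<in> U ?G" unfolding UG by (intro mem_restrictI[OF c1]) auto
  moreover have "Neg (Old x0) \<in> ?c" by simp
  ultimately show ?thesis unfolding Var_def by (metis UnionI image_eqI var.simps(2))
qed

end


lemma lit_true_comp[simp]: "lit_true \<alpha> (comp k) = (\<not> lit_true \<alpha> k)"
  by (cases k) auto

lemma assign_mem: "k \<in> assign_lits \<alpha> S \<longleftrightarrow> var k \<in> S \<and> lit_true \<alpha> k"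
  by (cases k) (auto simp: assign_lits_def)

lemma lt_cons: "consistent J \<Longrightarrow> map_lit Old k \<in> J \<Longrightarrow> lit_true (\<lambda>w. Pos (Old w) \<in> J) k"
  unfolding consistent_def by (cases k) force+

lemma lt_iff:
  assumes "consistent J" "Old (var k) \<in> var ` J"
  shows "map_lit Old k \<in> J \<longleftrightarrow> lit_true (\<lambda>w. Pos (Old w) \<in> J) k"
proof
  assume "map_lit Old k \<in> J" then show "lit_true (\<lambda>w. Pos (Old w) \<in> J) k" using lt_cons assms(1) by blast
next
  assume lt: "lit_true (\<lambda>w. Pos (Old w) \<in> J) k"
  from assms(2) obtain j where j: "j \<in> J" "var j = Old (var k)" by auto
  show "map_lit Old k \<in> J"
  proof (cases k)
    case (Pos w) then show ?thesis using lt by simp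
  next
    case (Neg w)
    then have "Pos (Old w) \<notin> J" using lt by simp
    moreover have "j = Pos (Old w) \<or> j = Neg (Old w)" using j(2) Neg by (cases j) auto
    ultimately show ?thesis using j(1) Neg by auto
  qed
qed

context setting begin

lemma V_der:
  assumes J: "Jok J" and i: "i \<in> {1..n}" and a: "Old (xv i) \<in> var ` J"
  shows "up_lit (restrict H J) (Pos (V i))"
proof -
  from a obtain j where j: "j \<in> J" "var j = Old (xv i)" by auto
  have cons: "consistent J" using J unfolding Jok_def by auto
  have pv: "Pos (V i) \<notin> J \<and> Pos (V i) \<notin> comp ` J" using nonOld_notin[OF J] by simp
  have "j = Pos (Old (xv i)) \<or> j = Neg (Old (xv i))" using j(2) by (cases j) auto
  then have "{Pos (V i)} \<in> restrict H J"
  proof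
    assume jp: "j = Pos (Old (xv i))"
    let ?c = "{Neg (Old (xv i)), Pos (V i)}"
    have "?c \<in> H" using i unfolding memH by auto
    moreover have "Neg (Old (xv i)) \<notin> J" using cons j(1) jp unfolding consistent_def by force
    moreover have "Neg (Old (xv i)) \<in> comp ` J" using j(1) jp by force
    ultimately show ?thesis using pv by (intro mem_restrictI[of ?c]) auto
  next
    assume jp: "j = Neg (Old (xv i))"
    let ?c = "{Pos (Old (xv i)), Pos (V i)}"
    have "?c \<in> H" using i unfolding memH by auto
    moreover have "Pos (Old (xv i)) \<notin> J" using cons j(1) jp unfolding consistent_def by force
    moreover have "Pos (Old (xv i)) \<in> comp ` J" using j(1) jp by force
    ultimately show ?thesis using pv by (intro mem_restrictI[of ?c]) auto
  qed
  then show ?thesis by (rule up_lit_intro) auto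
qed

lemma AB_der:
  assumes J: "Jok J" and UA0: "UA J = {}" and ab: "ab = A \<or> ab = B"
  shows "up_lit (restrict H J) (Pos ab)"
proof -
  let ?c = "insert (Pos ab) NV"
  have "?c \<in> H" using ab unfolding memH by auto
  moreover have "\<forall>k\<in>?c. k \<notin> J \<and> k \<notin> comp ` J"
  proof
    fix k assume "k \<in> ?c"
    then have "var k \<notin> range Old" using ab by auto
    then show "k \<notin> J \<and> k \<notin> comp ` J" using nonOld_notin[OF J] by blast
  qed
  ultimately have c: "?c \<in> restrict H J" by (intro mem_restrictI[of ?c]) auto
  show ?thesis
  proof (rule up_lit_intro[OF c])
    fix l' assume "l' \<in> ?c" "l' \<noteq> Pos ab"
    then obtain i where i: "i \<in> {1..n}" "l' = Neg (V i)" by auto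
    have "xv i \<in> X" using Xdef i by auto
    then have "Old (xv i) \<in> var ` J" using UA0 unfolding UA_def by auto
    then show "up_lit (restrict H J) (comp l')" using V_der[OF J i(1)] i by simp
  qed simp
qed


lemma Jok_Old: "Jok J \<Longrightarrow> l \<in> J \<Longrightarrow> var l \<in> Bs"
  unfolding Jok_def by auto

lemma ZA:
  assumes J: "Jok J" and nr: "\<not> refuted (restrict H J)"
    and noB: "Bs \<inter> Var (U (restrict H J)) = {}"
  shows False
proof -
  have UA0: "UA J = {}"
  proof (rule ccontr)
    assume "UA J \<noteq> {}"
    then obtain x0 where x0: "x0 \<in> UA J" by auto
    then have "x0 \<in> X" unfolding UA_def by auto
    with PL_var[OF J x0] noB show False by auto
  qed
  let ?G = "restrict H J"
  define D where "D = Der ?G"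
  have fG: "fin ?G" using fin_restrict finH by blast
  have UG: "U ?G = restrict ?G D" unfolding D_def by (rule U_Der[OF fG nr])
  have consD: "consistent D" unfolding D_def by (rule Der_consistent[OF nr])
  have DJ: "\<forall>d\<in>D. var d \<notin> var ` J" unfolding D_def Der_def using up_lit_restrict_var by blast
  have AD: "Pos A \<in> D" "Pos B \<in> D" unfolding D_def Der_def using AB_der[OF J UA0] by auto
  have consJ: "consistent J" using J unfolding Jok_def by auto
  have JD: "\<forall>j\<in>J. comp j \<notin> D" using DJ by (metis image_eqI var_comp)
  have R_eq: "restrict H (J \<union> D) = U ?G" unfolding UG using restrict_restrict[OF JD] by simp
  define W where "W = {w \<in> (X \<union> Y) \<inter> Var F. Old w \<notin> var ` (J \<union> D)}"
  have finW: "finite W"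
  proof -
    have "fin F" unfolding fin_def using finF finC by auto
    then have "finite (Var F)" by (rule finite_Var)
    then show ?thesis unfolding W_def by auto
  qed
  define NW where "NW = (\<lambda>W'::'a set. (\<lambda>w. Neg (Old w)) ` W')"
  have NWD: "\<forall>j\<in>J \<union> NW W'. comp j \<notin> D" if "W' \<subseteq> W" for W'
  proof
    fix j assume "j \<in> J \<union> NW W'"
    then show "comp j \<notin> D"
    proof
      assume "j \<in> J" then show ?thesis using JD by auto
    next
      assume "j \<in> NW W'"
      then obtain w where "w \<in> W'" "j = Neg (Old w)" unfolding NW_def by auto
      moreover have "W' \<subseteq> W" by (rule that)
      ultimately have "w \<in> W" "j = Neg (Old w)" by auto
      then have "Old w \<notin> var ` D" "j = Neg (Old w)" unfolding W_def by auto
      then have "Pos (Old w) \<notin> D" "j = Neg (Old w)" by (metis image_eqI var.simps(1))+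
      then show ?thesis by simp
    qed
  qed
  have step: "\<not> refuted (restrict H (J \<union> NW W')) \<and> Der (restrict H (J \<union> NW W')) = D"
    if "finite W'" "W' \<subseteq> W" for W'
    using that
  proof (induction W' rule: finite_induct)
    case empty
    then show ?case using nr unfolding NW_def D_def by simp
  next
    case (insert w W'')
    let ?J2 = "J \<union> NW W''"
    let ?G2 = "restrict H ?J2"
    have IH: "\<not> refuted ?G2" "Der ?G2 = D" using insert by auto
    have wW: "w \<in> W" using insert(4) by auto
    have fG2: "fin ?G2" using fin_restrict finH by blast
    have nc: "\<forall>j\<in>?J2. comp j \<noteq> Neg (Old w)"
    proof
      fix j assume "j \<in> ?J2"
      then show "comp j \<noteq> Neg (Old w)"
      proof
        assume "j \<in> J"
        moreover have "Old w \<notin> var ` J" using wW unfolding W_def by auto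
        ultimately show ?thesis by (metis image_eqI var.simps(2) var_comp)
      next
        assume "j \<in> NW W''" then show ?thesis unfolding NW_def by auto
      qed
    qed
    have eqJ: "J \<union> NW (insert w W'') = insert (Neg (Old w)) ?J2" unfolding NW_def by auto
    have eqG: "restrict H (J \<union> NW (insert w W'')) = restrict ?G2 {Neg (Old w)}"
      unfolding eqJ using restrict_insert[OF nc] by simp
    have c3: "var (Neg (Old w)) \<notin> var ` Der ?G2" using IH(2) wW unfolding W_def by auto
    have "U ?G2 = restrict ?G2 D" using U_Der[OF fG2 IH(1)] IH(2) by simp
    also have "\<dots> = restrict H (?J2 \<union> D)"
    proof -
      have "W'' \<subseteq> W" using insert(4) by auto
      from restrict_restrict[OF NWD[OF this]] show ?thesis by simp
    qed
    finally have "Var (U ?G2) \<subseteq> Var (restrict H (J \<union> D))"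
      using Var_restrict_mono[of "J \<union> D" "?J2 \<union> D" H] by auto
    then have "Old w \<notin> Var (U ?G2)" using R_eq noB wW unfolding W_def by auto
    then have c4: "var (Neg (Old w)) \<notin> Var (U ?G2)" by simp
    from E_lemma[OF fG2 IH(1) c3 c4] show ?case
      unfolding eqG uequiv_def using IH by auto
  qed
  define J' where "J' = J \<union> NW W"
  have nr': "\<not> refuted (restrict H J')" and DJ': "Der (restrict H J') = D"
    using step[OF finW] unfolding J'_def by auto
  define J'' where "J'' = J' \<union> D"
  have eqJ'': "restrict H J'' = restrict (restrict H J') D"
    unfolding J''_def J'_def using restrict_restrict NWD by blast
  have noE: "{} \<notin> restrict H J''"
  proof
    assume "{} \<in> restrict H J''"
    then have "{} \<in> restrict (restrict H J') D" using eqJ'' by simp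
    then obtain C where C: "C \<in> restrict H J'" "C \<inter> D = {}" "{} = C - comp ` D"
      unfolding mem_restrict[of "{}" "restrict H J'" D] by blast
    have "\<forall>l\<in>C. up_lit (restrict H J') (comp l)"
    proof
      fix l assume "l \<in> C"
      then have "l \<in> comp ` D" using C(3) by auto
      then have "comp l \<in> D" by auto
      then show "up_lit (restrict H J') (comp l)" using DJ' unfolding Der_def by auto
    qed
    with C(1) nr' show False unfolding refuted_def by auto
  qed
  have J'Bs: "\<forall>l\<in>J'. var l \<in> Bs"
    using J unfolding J'_def NW_def W_def Jok_def by auto
  have consJ'': "consistent J''"
    unfolding consistent_def
  proof
    fix l assume l: "l \<in> J''"
    have WJ: "\<forall>w\<in>W. Old w \<notin> var ` J \<and> Old w \<notin> var ` D" unfolding W_def by auto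
    from l have "l \<in> J \<or> l \<in> NW W \<or> l \<in> D" unfolding J''_def J'_def by auto
    then show "comp l \<notin> J''"
    proof (elim disjE)
      assume "l \<in> J"
      moreover have "comp l \<notin> J" using consJ calculation unfolding consistent_def by auto
      moreover have "comp l \<notin> NW W"
      proof
        assume "comp l \<in> NW W"
        then obtain w where "w \<in> W" "comp l = Neg (Old w)" unfolding NW_def by auto
        then have "var l = Old w" by (metis var.simps(2) var_comp)
        with \<open>l \<in> J\<close> \<open>w \<in> W\<close> WJ show False by (metis image_eqI)
      qed
      moreover have "comp l \<notin> D" using JD \<open>l \<in> J\<close> by auto
      ultimately show ?thesis by (auto simp: J''_def J'_def)
    next
      assume "l \<in> NW W"
      then obtain w where w: "w \<in> W" "l = Neg (Old w)" unfolding NW_def by auto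
      have "Pos (Old w) \<notin> J" using w WJ by (metis image_eqI var.simps(1))
      moreover have "Pos (Old w) \<notin> D" using w WJ by (metis image_eqI var.simps(1))
      moreover have "Pos (Old w) \<notin> NW W" unfolding NW_def by auto
      ultimately show ?thesis using w by (auto simp: J''_def J'_def)
    next
      assume "l \<in> D"
      moreover have "comp l \<notin> D" using consD calculation unfolding consistent_def by auto
      moreover have "comp l \<notin> J" using DJ \<open>l \<in> D\<close> by (metis image_eqI var_comp)
      moreover have "comp l \<notin> NW W"
      proof
        assume "comp l \<in> NW W"
        then obtain w where "w \<in> W" "comp l = Neg (Old w)" unfolding NW_def by auto
        then have "var l = Old w" by (metis var.simps(2) var_comp)
        with \<open>l \<in> D\<close> \<open>w \<in> W\<close> WJ show False by (metis image_eqI)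
      qed
      ultimately show ?thesis by (auto simp: J''_def J'_def)
    qed
  qed
  have assXY: "Old w \<in> var ` J''" if "w \<in> (X \<union> Y) \<inter> Var F" for w
  proof (cases "Old w \<in> var ` (J \<union> D)")
    case True then show ?thesis unfolding J''_def J'_def by auto
  next
    case False
    then have "w \<in> W" using that unfolding W_def by auto
    then have "Neg (Old w) \<in> J''" unfolding J''_def J'_def NW_def by auto
    then show ?thesis by (metis image_eqI var.simps(2))
  qed
  define \<alpha> where "\<alpha> = (\<lambda>w. Pos (Old w) \<in> J'')"
  let ?AL = "assign_lits \<alpha> (X \<union> Y)"
  let ?FA = "restrict F ?AL"
  have DJ'': "D \<subseteq> J''" unfolding J''_def by auto
  have c5: "up_lit ?FA l \<Longrightarrow> up_lit (restrict H J') (map_lit Old l)" for l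
  proof (induction rule: up_lit.induct)
    case (1 C' l)
    from 1(1) obtain \<gamma> where g: "\<gamma> \<in> F" "\<gamma> \<inter> ?AL = {}" "C' = \<gamma> - comp ` ?AL"
      by (auto simp: mem_restrict)
    have lg: "l \<in> \<gamma>" "l \<notin> comp ` ?AL" using 1(2) g(3) by auto
    have varl: "var l \<notin> X \<union> Y"
    proof
      assume v: "var l \<in> X \<union> Y"
      show False
      proof (cases "lit_true \<alpha> l")
        case True then have "l \<in> ?AL" using v by (simp add: assign_mem)
        with g(2) lg(1) show False by auto
      next
        case False then have "comp l \<in> ?AL" using v by (simp add: assign_mem)
        then have "l \<in> comp ` ?AL" by (metis comp_comp image_eqI)
        with lg(2) show False by auto
      qed
    qed
    let ?Cg = "map_lit Old ` \<gamma> \<union> {Neg A, Neg B}"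
    have CgH: "?Cg \<in> H" using g(1) unfolding memH by auto
    have CgJ: "?Cg \<inter> J' = {}"
    proof (rule ccontr)
      assume "?Cg \<inter> J' \<noteq> {}"
      then obtain x where x: "x \<in> ?Cg" "x \<in> J'" by auto
      have "var x \<in> Bs" using J'Bs x(2) by auto
      then obtain k where k: "k \<in> \<gamma>" "x = map_lit Old k" using x(1) by auto
      have "var k \<in> X \<union> Y" using \<open>var x \<in> Bs\<close> k(2) by auto
      moreover have "lit_true \<alpha> k" unfolding \<alpha>_def
        using lt_cons[OF consJ''] x(2) k(2) unfolding J''_def by auto
      ultimately have "k \<in> ?AL" by (simp add: assign_mem)
      with k(1) g(2) show False by auto
    qed
    have CgR: "?Cg - comp ` J' \<in> restrict H J'" using CgH CgJ by (intro mem_restrictI) auto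
    have lR: "map_lit Old l \<in> ?Cg - comp ` J'"
    proof -
      have "map_lit Old l \<notin> comp ` J'"
      proof
        assume "map_lit Old l \<in> comp ` J'"
        then obtain j where "j \<in> J'" "map_lit Old l = comp j" by auto
        then have "Old (var l) \<in> Bs" using J'Bs by (metis var_comp var_map_Old)
        then have "var l \<in> X \<union> Y" by auto
        with varl show False by simp
      qed
      then show ?thesis using lg(1) by auto
    qed
    show ?case
    proof (rule up_lit_intro[OF CgR lR])
      fix k' assume k': "k' \<in> ?Cg - comp ` J'" "k' \<noteq> map_lit Old l"
      show "up_lit (restrict H J') (comp k')"
      proof (cases "k' = Neg A \<or> k' = Neg B")
        case True
        then show ?thesis using AD DJ' unfolding Der_def by auto
      next
        case False
        then obtain k where k: "k \<in> \<gamma>" "k' = map_lit Old k" using k' by auto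
        have kl: "k \<noteq> l" using k k' by auto
        show ?thesis
        proof (cases "var k \<in> X \<union> Y")
          case True
          have "k \<notin> ?AL" using g(2) k(1) by auto
          then have nt: "\<not> lit_true \<alpha> k" using True by (auto simp: assign_mem)
          have "var k \<in> Var F" using k(1) g(1) unfolding Var_def by auto
          then have "Old (var (comp k)) \<in> var ` J''" using assXY True by simp
          then have "map_lit Old (comp k) \<in> J''"
            using lt_iff[OF consJ''] nt unfolding \<alpha>_def by simp
          moreover have "map_lit Old (comp k) \<notin> J'"
          proof
            assume "map_lit Old (comp k) \<in> J'"
            then have "k' \<in> comp ` J'" using k(2) by (metis comp_comp comp_map_Old image_eqI)
            with k' show False by auto
          qed
          ultimately have "map_lit Old (comp k) \<in> D" unfolding J''_def by auto
          then show ?thesis using DJ' k(2) unfolding Der_def by auto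
        next
          case False
          have "k \<notin> comp ` ?AL"
          proof
            assume "k \<in> comp ` ?AL"
            then obtain a where "a \<in> ?AL" "k = comp a" by auto
            then have "var k \<in> X \<union> Y" by (simp add: assign_mem)
            with False show False by simp
          qed
          then have "k \<in> C' - {l}" using k(1) kl g(3) by auto
          then have "up_lit (restrict H J') (map_lit Old (comp k))" using 1(3) by auto
          then show ?thesis using k(2) by simp
        qed
      qed
    qed
  qed
  have assZ: "Old z \<in> var ` J''" if "z \<in> Z" for z
  proof -
    have "up_lit ?FA (Pos z) \<or> up_lit ?FA (Neg z)" using Zhyp that by blast
    then have "map_lit Old (Pos z) \<in> D \<or> map_lit Old (Neg z) \<in> D"
      using c5 DJ' unfolding Der_def by blast
    then have "Pos (Old z) \<in> J'' \<or> Neg (Old z) \<in> J''" using DJ'' by auto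
    then show ?thesis by (metis image_eqI var.simps)
  qed
  have assF: "Old (var k) \<in> var ` J''" if "var k \<in> Var F" for k
    using that VarF assXY assZ by blast
  have "satisfiable F" unfolding satisfiable_def
  proof (intro exI[of _ \<alpha>] ballI)
    fix \<gamma> assume g: "\<gamma> \<in> F"
    show "\<exists>l\<in>\<gamma>. lit_true \<alpha> l"
    proof (rule ccontr)
      assume "\<not> (\<exists>l\<in>\<gamma>. lit_true \<alpha> l)"
      then have nt: "\<forall>k\<in>\<gamma>. \<not> lit_true \<alpha> k" by auto
      let ?Cg = "map_lit Old ` \<gamma> \<union> {Neg A, Neg B}"
      have CgH: "?Cg \<in> H" using g unfolding memH by auto
      have AJ: "Pos A \<in> J''" "Pos B \<in> J''" using AD DJ'' by auto
      have nAJ: "Neg A \<notin> J''" "Neg B \<notin> J''" using AJ consJ'' unfolding consistent_def by force+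
      have vk: "Old (var k) \<in> var ` J''" if "k \<in> \<gamma>" for k
        using assF that g unfolding Var_def by auto
      have "?Cg \<inter> J'' = {}"
      proof -
        have "map_lit Old k \<notin> J''" if "k \<in> \<gamma>" for k
          using lt_cons[OF consJ''] nt that unfolding \<alpha>_def by blast
        then show ?thesis using nAJ by auto
      qed
      moreover have "?Cg - comp ` J'' = {}"
      proof -
        have "map_lit Old k \<in> comp ` J''" if "k \<in> \<gamma>" for k
        proof -
          have "Old (var (comp k)) \<in> var ` J''" using vk[OF that] by simp
          then have "map_lit Old (comp k) \<in> J''"
            using lt_iff[OF consJ''] nt that unfolding \<alpha>_def by simp
          then show ?thesis by (metis comp_comp comp_map_Old image_eqI)
        qed
        moreover have "Neg A \<in> comp ` J''" "Neg B \<in> comp ` J''" using AJ by force+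
        ultimately show ?thesis by auto
      qed
      ultimately have "{} \<in> restrict H J''" using CgH by (intro mem_restrictI) auto
      with noE show False by simp
    qed
  qed
  with unsat show False by simp
qed

end


fun sz :: "('a ext lit set \<Rightarrow> nat) \<Rightarrow> 'a ext lit set \<Rightarrow> 'a list \<Rightarrow> nat" where
  "sz m J [] = m J"
| "sz m J (x # xs) = Suc (sz m (insert (Neg (Old x)) J) xs + sz m (insert (Pos (Old x)) J) xs)"

fun build :: "('a ext lit set \<Rightarrow> 'a ext btree) \<Rightarrow> 'a ext lit set \<Rightarrow> 'a list \<Rightarrow> 'a ext btree" where
  "build t J [] = t J"
| "build t J (x # xs) = N (Old x) (build t (insert (Neg (Old x)) J) xs) (build t (insert (Pos (Old x)) J) xs)"

lemma sz_perm: "x \<in> set xs \<Longrightarrow> distinct xs \<Longrightarrow> sz m J xs = sz m J (x # remove1 x xs)"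
proof (induction xs arbitrary: J)
  case Nil then show ?case by simp
next
  case (Cons y ys)
  show ?case
  proof (cases "x = y")
    case True then show ?thesis by simp
  next
    case False
    then have x: "x \<in> set ys" "distinct ys" using Cons.prems by auto
    have "sz m J (y # ys) = Suc (sz m (insert (Neg (Old y)) J) ys + sz m (insert (Pos (Old y)) J) ys)" by simp
    also have "\<dots> = Suc (sz m (insert (Neg (Old y)) J) (x # remove1 x ys) + sz m (insert (Pos (Old y)) J) (x # remove1 x ys))"
      using Cons.IH[OF x] by simp
    also have "\<dots> = sz m J (x # remove1 x (y # ys))"
      using False by (simp add: insert_commute)
    finally show ?thesis .
  qed
qed

context setting begin

definition m :: "'a ext lit set \<Rightarrow> nat" where
  "m J = (LEAST s. \<exists>T. is_dmst Bs (restrict H J) T \<and> tsize T = s)"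

definition mt :: "'a ext lit set \<Rightarrow> 'a ext btree" where
  "mt J = (SOME T. is_dmst Bs (restrict H J) T \<and> tsize T = m J)"

lemma m_le: "is_dmst Bs (restrict H J) T \<Longrightarrow> m J \<le> tsize T"
  unfolding m_def by (rule Least_le) blast

lemma fRH: "fin (restrict H J)" using fin_restrict finH by blast

lemma Jok_insert: "Jok J \<Longrightarrow> var l \<in> Bs \<Longrightarrow> var l \<notin> var ` J \<Longrightarrow> Jok (insert l J)"
  unfolding Jok_def consistent_def by (auto, (metis image_eqI var_comp)+)

lemma nc_var: "var l \<notin> var ` J \<Longrightarrow> \<forall>j\<in>J. comp j \<noteq> l"
  by (metis image_eqI var_comp)

lemma var_Var_U: "var l \<in> Var (U (restrict H J)) \<Longrightarrow> var l \<notin> var ` J"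
  using Var_U[OF fRH] Var_restrict[of H J] by blast

lemma EX_aux: "card (Bs \<inter> Var (U (restrict H J))) = k \<Longrightarrow> Jok J \<Longrightarrow> \<exists>T. is_dmst Bs (restrict H J) T"
proof (induction k arbitrary: J rule: less_induct)
  case (less k)
  let ?G = "restrict H J"
  have fG: "fin ?G" by (rule fRH)
  show ?case
  proof (cases "refuted ?G")
    case True
    then have "is_dmst Bs ?G E" using U_conflict_iff[OF fG] by (auto intro: dmst_E)
    then show ?thesis by blast
  next
    case nr: False
    then obtain b where b: "b \<in> Bs" "b \<in> Var (U ?G)" using ZA[OF less.prems(2)] by blast
    have child: "\<exists>T. is_dmst Bs (restrict ?G {l}) T" if vl: "var l = b" for l
    proof -
      have vJ: "var l \<notin> var ` J" using var_Var_U[of l J] b(2) vl by simp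
      have eqr: "restrict ?G {l} = restrict H (insert l J)" using restrict_insert[OF nc_var[OF vJ]] .
      have Jl: "Jok (insert l J)" using Jok_insert less.prems(2) b(1) vl vJ by simp
      show ?thesis
      proof (cases "refuted (restrict H (insert l J))")
        case True
        then have "is_dmst Bs (restrict H (insert l J)) E" using U_conflict_iff[OF fRH] by (auto intro: dmst_E)
        then show ?thesis using eqr by auto
      next
        case False
        have ce: "uequiv (restrict (U ?G) {l}) (restrict ?G {l})"
          using child_equiv[OF fG nr] b(2) vl by simp
        have "U (restrict H (insert l J)) = U (restrict (U ?G) {l})"
          using ce False eqr unfolding uequiv_def by auto
        moreover have "Var (U (restrict (U ?G) {l})) \<subseteq> Var (U ?G) - {b}"
          using Var_U[OF fin_restrict[OF fin_U[OF fG]]] Var_restrict[of "U ?G" "{l}"] vl by auto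
        ultimately have sub: "Bs \<inter> Var (U (restrict H (insert l J))) \<subset> Bs \<inter> Var (U ?G)"
          using b by auto
        have "finite (Bs \<inter> Var (U ?G))" using finite_Var[OF fin_U[OF fG]] by auto
        then have "card (Bs \<inter> Var (U (restrict H (insert l J)))) < k"
          using psubset_card_mono[OF _ sub] less.prems(1) by simp
        from less.IH[OF this refl Jl] show ?thesis using eqr by simp
      qed
    qed
    obtain T1 where T1: "is_dmst Bs (restrict ?G {Neg b}) T1" using child[of "Neg b"] by auto
    obtain T2 where T2: "is_dmst Bs (restrict ?G {Pos b}) T2" using child[of "Pos b"] by auto
    have "is_dmst Bs ?G (N b T1 T2)"
    proof (rule dmst_N)
      show "{} \<notin> U ?G" using U_conflict_iff[OF fG] nr by simp
      show "b \<in> Bs \<inter> Var (U ?G)" using b by simp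
      show "is_dmst Bs (U (restrict (U ?G) {Neg b})) T1" using child_dmst[OF fG nr _ T1] b(2) by simp
      show "is_dmst Bs (U (restrict (U ?G) {Pos b})) T2" using child_dmst[OF fG nr _ T2] b(2) by simp
    qed
    then show ?thesis by blast
  qed
qed

lemma EX: "Jok J \<Longrightarrow> \<exists>T. is_dmst Bs (restrict H J) T"
  using EX_aux by blast

lemma mt: "Jok J \<Longrightarrow> is_dmst Bs (restrict H J) (mt J) \<and> tsize (mt J) = m J"
proof -
  assume "Jok J"
  then obtain T where "is_dmst Bs (restrict H J) T" using EX by blast
  then have "\<exists>s. \<exists>T. is_dmst Bs (restrict H J) T \<and> tsize T = s" by blast
  from LeastI_ex[OF this] have "\<exists>T. is_dmst Bs (restrict H J) T \<and> tsize T = m J"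
    unfolding m_def .
  then show ?thesis unfolding mt_def by (rule someI_ex)
qed

end


context setting begin

lemma UA_insert: "UA (insert l J) = {x \<in> UA J. Old x \<noteq> var l}"
  unfolding UA_def by auto

lemma full_ineq:
  assumes J: "Jok J" and UA0: "UA J = {}" and y: "y \<in> Y" and vy: "Old y \<notin> var ` J"
  shows "m J \<le> Suc (m (insert (Neg (Old y)) J) + m (insert (Pos (Old y)) J))"
proof -
  let ?G = "restrict H J"
  have fG: "fin ?G" by (rule fRH)
  have yB: "Old y \<in> Bs" using y by auto
  have eqr: "restrict ?G {l} = restrict H (insert l J)" if "var l = Old y" for l
  proof -
    have "var l \<notin> var ` J" using vy that by simp
    from restrict_insert[OF nc_var[OF this]] show ?thesis .
  qed
  have Jl: "Jok (insert l J)" if "var l = Old y" for l using Jok_insert J yB vy that by simp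
  show ?thesis
  proof (cases "refuted ?G")
    case True
    then have "is_dmst Bs ?G E" using U_conflict_iff[OF fG] by (auto intro: dmst_E)
    then have "m J \<le> 0" using m_le by fastforce
    then show ?thesis by simp
  next
    case nr: False
    show ?thesis
    proof (cases "Old y \<in> Var (U ?G)")
      case True
      let ?T1 = "mt (insert (Neg (Old y)) J)"
      let ?T2 = "mt (insert (Pos (Old y)) J)"
      have "is_dmst Bs ?G (N (Old y) ?T1 ?T2)"
      proof (rule dmst_N)
        show "{} \<notin> U ?G" using U_conflict_iff[OF fG] nr by simp
        show "Old y \<in> Bs \<inter> Var (U ?G)" using True yB by simp
        show "is_dmst Bs (U (restrict (U ?G) {Neg (Old y)})) ?T1"
          using child_dmst[OF fG nr _ ] True mt[OF Jl] eqr by simp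
        show "is_dmst Bs (U (restrict (U ?G) {Pos (Old y)})) ?T2"
          using child_dmst[OF fG nr _ ] True mt[OF Jl] eqr by simp
      qed
      from m_le[OF this] show ?thesis using mt[OF Jl] by simp
    next
      case nV: False
      show ?thesis
      proof (cases "Old y \<in> var ` Der ?G")
        case True
        then obtain l where l: "l \<in> Der ?G" "var l = Old y" by auto
        have "uequiv ?G (restrict ?G {l})"
          by (rule L_inv[OF fG]) (use l(1) in \<open>auto simp: consistent_def\<close>)
        then have e: "uequiv (restrict H (insert l J)) ?G" using uequiv_sym eqr[OF l(2)] by metis
        have "is_dmst Bs ?G (mt (insert l J))" using dmst_equiv[OF fRH fG e] mt[OF Jl[OF l(2)]] by simp
        then have "m J \<le> m (insert l J)" using m_le mt[OF Jl[OF l(2)]] by fastforce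
        moreover have "l = Neg (Old y) \<or> l = Pos (Old y)" using l(2) by (cases l) auto
        ultimately show ?thesis by auto
      next
        case False
        have "uequiv ?G (restrict ?G {Pos (Old y)})"
          using E_lemma[OF fG nr] False nV by simp
        then have e: "uequiv (restrict H (insert (Pos (Old y)) J)) ?G" using uequiv_sym eqr[of "Pos (Old y)"] by simp
        have "is_dmst Bs ?G (mt (insert (Pos (Old y)) J))" using dmst_equiv[OF fRH fG e] mt[OF Jl] by simp
        then have "m J \<le> m (insert (Pos (Old y)) J)" using m_le mt[OF Jl] by fastforce
        then show ?thesis by auto
      qed
    qed
  qed
qed

lemma Y_ineq:
  "Jok J \<Longrightarrow> distinct xs \<Longrightarrow> set xs = UA J \<Longrightarrow> y \<in> Y \<Longrightarrow> Old y \<notin> var ` J \<Longrightarrow>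
   sz m J xs \<le> Suc (sz m (insert (Neg (Old y)) J) xs + sz m (insert (Pos (Old y)) J) xs)"
proof (induction xs arbitrary: J)
  case Nil
  then show ?case using full_ineq by simp
next
  case (Cons x xs)
  have x: "x \<in> UA J" using Cons.prems(3) by auto
  then have xX: "x \<in> X" and vx: "Old x \<notin> var ` J" unfolding UA_def by auto
  have xy: "Old x \<noteq> Old y" using xX Cons.prems(4) XY by auto
  have xB: "Old x \<in> Bs" using xX by auto
  have IHs: "sz m (insert l J) xs \<le> Suc (sz m (insert (Neg (Old y)) (insert l J)) xs + sz m (insert (Pos (Old y)) (insert l J)) xs)"
    if "var l = Old x" for l
  proof (rule Cons.IH)
    show "Jok (insert l J)" using Jok_insert Cons.prems(1) xB vx that by simp
    show "distinct xs" using Cons.prems(2) by simp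
    show "set xs = UA (insert l J)" using Cons.prems(2,3) that unfolding UA_insert by auto
    show "y \<in> Y" by (rule Cons.prems(4))
    show "Old y \<notin> var ` insert l J" using Cons.prems(5) xy that by auto
  qed
  have a: "sz m (insert (Neg (Old x)) J) xs \<le> Suc (sz m (insert (Neg (Old y)) (insert (Neg (Old x)) J)) xs + sz m (insert (Pos (Old y)) (insert (Neg (Old x)) J)) xs)"
    using IHs[of "Neg (Old x)"] by simp
  have b: "sz m (insert (Pos (Old x)) J) xs \<le> Suc (sz m (insert (Neg (Old y)) (insert (Pos (Old x)) J)) xs + sz m (insert (Pos (Old y)) (insert (Pos (Old x)) J)) xs)"
    using IHs[of "Pos (Old x)"] by simp
  show ?case using a b by (simp add: insert_commute)
qed

lemma LB:
  "is_dmst Bv G T \<Longrightarrow> Bv = Bs \<Longrightarrow> fin G \<Longrightarrow> Jok J \<Longrightarrow> uequiv G (restrict H J) \<Longrightarrow> distinct xs \<Longrightarrow>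
   set xs = UA J \<Longrightarrow> sz m J xs \<le> tsize T"
proof (induction arbitrary: J xs rule: is_dmst.induct)
  case (dmst_E F B)
  have "refuted F" using U_conflict_iff[OF dmst_E(3)] dmst_E(1) by simp
  then have r: "refuted (restrict H J)" using dmst_E(5) unfolding uequiv_def by simp
  have "UA J = {}" using PL_nr[OF dmst_E(4)] r by blast
  then have "xs = []" using dmst_E(7) by simp
  moreover have "is_dmst Bs (restrict H J) E" using U_conflict_iff[OF fRH] r by (auto intro: is_dmst.dmst_E)
  ultimately show ?case using m_le by fastforce
next
  case (dmst_N F x B T1 T2)
  let ?G = "restrict H J"
  have fG: "fin ?G" by (rule fRH)
  have nrF: "\<not> refuted F" using U_conflict_iff[OF dmst_N.prems(2)] dmst_N(1) by simp
  have nr: "\<not> refuted ?G" and UFG: "U F = U ?G" using dmst_N.prems(4) nrF unfolding uequiv_def by auto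
  have xV: "x \<in> Var (U ?G)" using dmst_N(2) UFG by simp
  have xB: "x \<in> Bs" using dmst_N(2) dmst_N.prems(1) by simp
  have vx: "x \<notin> var ` J" using var_Var_U[of "Pos x" J] xV by simp
  have ch: "fin (U (restrict (U F) {l})) \<and> uequiv (U (restrict (U F) {l})) (restrict H (insert l J)) \<and> Jok (insert l J)"
    if vl: "var l = x" for l
  proof (intro conjI)
    show f: "fin (U (restrict (U F) {l}))" using fin_U fin_restrict dmst_N.prems(2) by blast
    have e1: "uequiv (U (restrict (U ?G) {l})) (restrict (U ?G) {l})"
      using uequiv_sym[OF uequiv_U[OF fin_restrict[OF fin_U[OF fG]]]] .
    have e2: "uequiv (restrict (U ?G) {l}) (restrict ?G {l})" using child_equiv[OF fG nr] xV vl by simp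
    have "var l \<notin> var ` J" using vx vl by simp
    from restrict_insert[OF nc_var[OF this]] have e3: "restrict ?G {l} = restrict H (insert l J)" .
    show "uequiv (U (restrict (U F) {l})) (restrict H (insert l J))"
      using uequiv_trans[OF e1 e2] e3 UFG by simp
    show "Jok (insert l J)" using Jok_insert dmst_N.prems(3) xB vx vl by simp
  qed
  obtain w where w: "w \<in> X \<union> Y" "x = Old w" using xB by auto
  show ?case
  proof (cases "w \<in> X")
    case True
    then have wU: "w \<in> set xs" using dmst_N.prems(6) vx w(2) unfolding UA_def by auto
    let ?r = "remove1 w xs"
    have sr: "set ?r = UA (insert l J)" if "var l = x" for l
      using dmst_N.prems(5,6) that w(2) unfolding UA_insert by auto
    have dr: "distinct ?r" using dmst_N.prems(5) by simp
    have "sz m (insert (Neg (Old w)) J) ?r \<le> tsize T1"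
      using dmst_N.IH(1)[OF dmst_N.prems(1)] ch[of "Neg x"] sr[of "Neg x"] dr w(2) by simp
    moreover have "sz m (insert (Pos (Old w)) J) ?r \<le> tsize T2"
      using dmst_N.IH(2)[OF dmst_N.prems(1)] ch[of "Pos x"] sr[of "Pos x"] dr w(2) by simp
    moreover have "sz m J xs = sz m J (w # ?r)" by (rule sz_perm[OF wU dmst_N.prems(5)])
    ultimately show ?thesis by simp
  next
    case False
    then have wY: "w \<in> Y" using w(1) by simp
    have sr: "set xs = UA (insert l J)" if "var l = x" for l
      using dmst_N.prems(6) that w(2) False unfolding UA_insert UA_def by auto
    have "sz m (insert (Neg (Old w)) J) xs \<le> tsize T1"
      using dmst_N.IH(1)[OF dmst_N.prems(1)] ch[of "Neg x"] sr[of "Neg x"] dmst_N.prems(5) w(2) by simp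
    moreover have "sz m (insert (Pos (Old w)) J) xs \<le> tsize T2"
      using dmst_N.IH(2)[OF dmst_N.prems(1)] ch[of "Pos x"] sr[of "Pos x"] dmst_N.prems(5) w(2) by simp
    moreover have "sz m J xs \<le> Suc (sz m (insert (Neg (Old w)) J) xs + sz m (insert (Pos (Old w)) J) xs)"
      using Y_ineq[OF dmst_N.prems(3,5,6) wY] vx w(2) by simp
    ultimately show ?thesis by simp
  qed
qed

lemma build_ok:
  "Jok J \<Longrightarrow> distinct xs \<Longrightarrow> set xs = UA J \<Longrightarrow>
   is_dmst Bs (restrict H J) (build mt J xs) \<and> tsize (build mt J xs) = sz m J xs \<and>
   complete_then (Old ` set xs) (Old ` Y) (build mt J xs)"
proof (induction xs arbitrary: J)
  case Nil
  have d: "is_dmst Bs (restrict H J) (mt J)" "tsize (mt J) = m J" using mt[OF Nil.prems(1)] by auto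
  have "labels (mt J) \<subseteq> Bs \<inter> Var (restrict H J)" using dmst_labels[OF d(1) fRH] .
  moreover have "Bs \<inter> Var (restrict H J) \<subseteq> Old ` Y"
  proof
    fix v assume v: "v \<in> Bs \<inter> Var (restrict H J)"
    then obtain w where w: "w \<in> X \<union> Y" "v = Old w" by auto
    have "v \<notin> var ` J" using v Var_restrict[of H J] by auto
    then have "w \<notin> X" using Nil.prems(3) w(2) unfolding UA_def by auto
    then show "v \<in> Old ` Y" using w by auto
  qed
  ultimately have "complete_then {} (Old ` Y) (mt J)" by (intro ct_base) auto
  then show ?case using d by simp
next
  case (Cons x xs)
  let ?G = "restrict H J"
  have fG: "fin ?G" by (rule fRH)
  have x: "x \<in> UA J" using Cons.prems(3) by auto
  have nr: "\<not> refuted ?G" by (rule PL_nr[OF Cons.prems(1) x])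
  have xV: "Old x \<in> Var (U ?G)" by (rule PL_var[OF Cons.prems(1) x])
  have xX: "x \<in> X" and vx: "Old x \<notin> var ` J" using x unfolding UA_def by auto
  have xB: "Old x \<in> Bs" using xX by auto
  have IHs: "is_dmst Bs (U (restrict (U ?G) {l})) (build mt (insert l J) xs) \<and>
     tsize (build mt (insert l J) xs) = sz m (insert l J) xs \<and>
     complete_then (Old ` set xs) (Old ` Y) (build mt (insert l J) xs)" if vl: "var l = Old x" for l
  proof -
    have Jl: "Jok (insert l J)" using Jok_insert Cons.prems(1) xB vx vl by simp
    have s: "set xs = UA (insert l J)" using Cons.prems(2,3) vl unfolding UA_insert by auto
    have ih: "is_dmst Bs (restrict H (insert l J)) (build mt (insert l J) xs) \<and>
     tsize (build mt (insert l J) xs) = sz m (insert l J) xs \<and>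
     complete_then (Old ` set xs) (Old ` Y) (build mt (insert l J) xs)"
      using Cons.IH[OF Jl _ s] Cons.prems(2) by simp
    have "var l \<notin> var ` J" using vx vl by simp
    from restrict_insert[OF nc_var[OF this]] have e3: "restrict ?G {l} = restrict H (insert l J)" .
    have "is_dmst Bs (U (restrict (U ?G) {l})) (build mt (insert l J) xs)"
      using child_dmst[OF fG nr _ ] xV vl ih e3 by simp
    with ih show ?thesis by simp
  qed
  have dm: "is_dmst Bs ?G (build mt J (x # xs))"
    unfolding build.simps
  proof (rule dmst_N)
    show "{} \<notin> U ?G" using U_conflict_iff[OF fG] nr by simp
    show "Old x \<in> Bs \<inter> Var (U ?G)" using xV xB by simp
  qed (use IHs in auto)
  have eqs: "Old ` set (x # xs) - {Old x} = Old ` set xs" using Cons.prems(2) by auto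
  have ct: "complete_then (Old ` set (x # xs)) (Old ` Y) (build mt J (x # xs))"
    unfolding build.simps
  proof (rule ct_node)
    show "Old x \<in> Old ` set (x # xs)" by simp
  qed (use IHs eqs in auto)
  show ?case using dm ct IHs[of "Neg (Old x)"] IHs[of "Pos (Old x)"] by simp
qed

end

theorem theorem5:
  fixes F :: "'a cnf" and X Y Z :: "'a set" and n :: nat and xv :: "nat \<Rightarrow> 'a"
  assumes "finite F" and "\<forall>C\<in>F. finite C"
    and "Var F \<subseteq> X \<union> Y \<union> Z"
    and "X \<inter> Y = {}" and "X \<inter> Z = {}" and "Y \<inter> Z = {}"
    and "inj_on xv {1..n}" and "X = xv ` {1..n}"
    and "\<not> satisfiable F"
    and "\<forall>\<alpha>. \<forall>z\<in>Z. up_lit (restrict F (assign_lits \<alpha> (X \<union> Y))) (Pos z)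
                   \<or> up_lit (restrict F (assign_lits \<alpha> (X \<union> Y))) (Neg z)"
  shows "\<exists>T. min_dmst (Old ` (X \<union> Y)) (cX F n xv) T \<and> complete_then (Old ` X) (Old ` Y) T"
proof -
  interpret S: setting F X Y Z n xv using assms by unfold_locales
  define xs where "xs = map xv [1..<Suc n]"
  have s1: "set [1..<Suc n] = {1..n}" by auto
  have sx: "set xs = X" unfolding xs_def using assms(8) s1 by simp
  have "inj_on xv (set [1..<Suc n])" unfolding s1 by (rule assms(7))
  then have dx: "distinct xs" unfolding xs_def distinct_map by simp
  have J0: "S.Jok {}" unfolding S.Jok_def consistent_def by simp
  have UA0: "set xs = S.UA {}" unfolding S.UA_def sx by simp
  have b: "is_dmst (Old ` (X \<union> Y)) (cX F n xv) (build S.mt {} xs) \<and> tsize (build S.mt {} xs) = sz S.m {} xs \<and>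
     complete_then (Old ` set xs) (Old ` Y) (build S.mt {} xs)"
    using S.build_ok[OF J0 dx UA0] by simp
  have "min_dmst (Old ` (X \<union> Y)) (cX F n xv) (build S.mt {} xs)"
    unfolding min_dmst_def
  proof (intro conjI allI impI)
    show "is_dmst (Old ` (X \<union> Y)) (cX F n xv) (build S.mt {} xs)" using b by simp
    fix T' assume "is_dmst (Old ` (X \<union> Y)) (cX F n xv) T'"
    from S.LB[OF this refl S.finH J0 _ dx UA0] b show "tsize (build S.mt {} xs) \<le> tsize T'"
      by (simp add: uequiv_refl)
  qed
  then show ?thesis using b sx by blast
qed


end
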